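(* Let $\lambda\ge\omega_3$ be a cardinal and let $F:[\lambda]^2\to\omega_1$ be an $\omega_1$-strongly unbounded function on $\lambda$. Then the forcing poset $\mathcal P=\langle P,\le\rangle$ defined in the context (using this $F$) satisfies the countable chain condition.
   Context: A function $F:[\lambda]^2\to\omega_1$ is $\omega_1$-strongly unbounded on $\lambda$ if for every ordinal $\delta<\omega_1$, every finite cardinal $\nu<\omega$ and every family $A\subseteq[\lambda]^\nu$ of pairwise disjoint sets with $|A|=\omega_1$, there are distinct $a,b\in A$ such that $F\{\alpha,\beta\}>\delta$ for all $\alpha\in a$, $\beta\in b$. For $s=\langle\alpha,\zeta\rangle$ write $\pi(s)=\alpha$, $\rho(s)=\zeta$. Let $T=(\omega_1\times\omega)\cup(\{\omega_1,\omega_1+1\}\times\lambda)$, with $T_\alpha=\{\alpha\}\times\omega$ for $\alpha<\omega_1$, $T_{\omega_1}=\{\omega_1\}\times\lambda$, $T_{\omega_1+1}=\{\omega_1+1\}\times\lambda$, and $t_\xi=\langle\omega_1+1,\xi\rangle$ for $\xi<\lambda$. Let $\mathbb B=\{S\}\cup\lambda$ (where $S$ is a new symbol), $\mathbb B_S=\omega_1\times\omega$ and $\mathbb B_\zeta=\{\omega_1\}\times[\omega\cdot\zeta,\omega\cdot\zeta+\omega)\cup\{t_\zeta\}$ for $\zeta<\lambda$; these partition $T$, and $\pi_B:T\to\mathbb B$ is defined by $x\in\mathbb B_{\pi_B(x)}$. $P$ consists of all triples $p=\langle X,\preceq,i\rangle$ such that: (P1) $X\in[T]^{<\omega}$; (P2)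 $\preceq$ is a partial order on $X$ such that $x\prec y$ implies $\pi(x)<\pi(y)$; (P3) if $X\cap\mathbb B_\zeta\ne\emptyset$ for some $\zeta<\lambda$, then $t_\zeta\in X$; (P4) if $x\in X\cap T_{\omega_1}\cap\mathbb B_\zeta$ for $\zeta<\lambda$, then $x\prec t_\zeta$ and $x\not\prec t_\xi$ for all $\xi\ne\zeta$ (with $t_\xi\in X$); (P5) if $s\neq t$ lie in the same $\mathbb B_b$ ($b\in\mathbb B$) with $\pi(s)=\pi(t)$, then $i\{s,t\}=\emptyset$; (P6) if $t\in X\cap T_{\alpha+1}$ for some $\alpha\le\omega_1$ and $s\prec t$, then there is $v\in X\cap T_\alpha$ with $s\preceq v\prec t$; (P7) $i:[X]^2\to[X]^{<\omega}$ satisfies $i\{x,y\}=\{x\}$ whenever $x\prec y$, and whenever $x,y\in X$ are $\preceq$-incomparable: (a) for all $u\in X$, ($u\preceq x$ and $u\preceq y$) iff $u\preceq v$ for some $v\in i\{x,y\}$; (b) if $x,y\in T_{\omega_1}\cup T_{\omega_1+1}$ and $\pi_B(x)\ne\pi_B(y)$, then $\pi[i\{x,y\}]\subseteq F\{\pi_B(x),\pi_B(y)\}$ (the ordinal $F\{\cdot,\cdot\}<\omega_1$ viewed as the set of smaller ordinals). Order: $\langle X',\preceq',i'\rangle\le\langle X,\preceq,i\rangle$ iff $X\subseteq X'$, $\preceq=\preceq'\cap(X\times X)$, and $i\subseteq i'$. *)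

theory Defs
  imports Main "HOL-Library.Countable_Set"
begin

text \<open>The ordinal omega_1 is modelled by a well-ordered type 'c of order type omega_1
  (uncountable, every proper initial segment countable); the cardinal lambda by a type 'l.\<close>

definition is_omega1_type :: "('c::wellorder) itself \<Rightarrow> bool" where
  "is_omega1_type _ \<longleftrightarrow> uncountable (UNIV :: 'c set) \<and> (\<forall>x::'c. countable {y. y < x})"

definition strongly_unbounded :: "('l set \<Rightarrow> 'c::wellorder) \<Rightarrow> bool" where
  "strongly_unbounded F \<longleftrightarrow>
     (\<forall>(\<delta>::'c) (\<nu>::nat) (A::'l set set).
        A \<subseteq> {a. finite a \<and> card a = \<nu>} \<and>
        (\<forall>a\<in>A. \<forall>b\<in>A. a \<noteq> b \<longrightarrow> a \<inter> b = {}) \<and>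
        ordIso2 (card_of A) (card_of (UNIV :: 'c set))
        \<longrightarrow> (\<exists>a\<in>A. \<exists>b\<in>A. a \<noteq> b \<and> (\<forall>\<alpha>\<in>a. \<forall>\<beta>\<in>b. \<delta> < F {\<alpha>, \<beta>})))"

text \<open>Levels = ordinals <= omega_1 + 1: countable ordinals, omega_1, omega_1+1.\<close>
datatype 'c lev = Ctbl 'c | W1 | W1s

fun lev_less :: "'c::wellorder lev \<Rightarrow> 'c lev \<Rightarrow> bool" where
  "lev_less (Ctbl a) (Ctbl b) = (a < b)"
| "lev_less (Ctbl a) W1 = True"
| "lev_less (Ctbl a) W1s = True"
| "lev_less W1 W1s = True"
| "lev_less _ _ = False"

definition lev_succ :: "'c::wellorder lev \<Rightarrow> 'c lev \<Rightarrow> bool" where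
  "lev_succ a b \<longleftrightarrow> lev_less a b \<and> \<not> (\<exists>c. lev_less a c \<and> lev_less c b)"

text \<open>Elements of T.  Lo a n = <a,n> in T_a (a<omega_1);
  Md z n = <omega_1, omega*z+n> in T_omega1 (z<lambda, n<omega; every xi<lambda is uniquely omega*z+n);
  Tp xi = t_xi = <omega_1+1, xi>.\<close>
datatype ('c,'l) node = Lo 'c nat | Md 'l nat | Tp 'l

fun lvl :: "('c,'l) node \<Rightarrow> 'c lev" where
  "lvl (Lo a n) = Ctbl a"
| "lvl (Md z n) = W1"
| "lvl (Tp x) = W1s"

datatype 'l blk = BS | Bk 'l

fun blk_of :: "('c,'l) node \<Rightarrow> 'l blk" where
  "blk_of (Lo a n) = BS"
| "blk_of (Md z n) = Bk z"
| "blk_of (Tp x) = Bk x"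

type_synonym ('c,'l) cond = "('c,'l) node set \<times> ('c,'l) node rel \<times> (('c,'l) node set \<Rightarrow> ('c,'l) node set)"

definition strict :: "'a rel \<Rightarrow> 'a \<Rightarrow> 'a \<Rightarrow> bool" where
  "strict le x y \<longleftrightarrow> (x, y) \<in> le \<and> x \<noteq> y"

text \<open>The conditions; i is a function on [X]^2, normalised to {} outside [X]^2.\<close>
definition Pcond :: "('l set \<Rightarrow> 'c::wellorder) \<Rightarrow> ('c,'l) cond \<Rightarrow> bool" where
  "Pcond F p \<longleftrightarrow> (case p of (X, le, i) \<Rightarrow>
     \<comment> \<open>P1\<close>
     finite X \<and>
     \<comment> \<open>P2\<close>
     le \<subseteq> X \<times> X \<and> partial_order_on X le \<and>
     (\<forall>x y. strict le x y \<longrightarrow> lev_less (lvl x) (lvl y)) \<and>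
     \<comment> \<open>P3\<close>
     (\<forall>z. (\<exists>x\<in>X. blk_of x = Bk z) \<longrightarrow> Tp z \<in> X) \<and>
     \<comment> \<open>P4\<close>
     (\<forall>z n. Md z n \<in> X \<longrightarrow> strict le (Md z n) (Tp z) \<and>
          (\<forall>\<xi>. \<xi> \<noteq> z \<and> Tp \<xi> \<in> X \<longrightarrow> \<not> strict le (Md z n) (Tp \<xi>))) \<and>
     \<comment> \<open>P5\<close>
     (\<forall>s\<in>X. \<forall>t\<in>X. s \<noteq> t \<and> blk_of s = blk_of t \<and> lvl s = lvl t \<longrightarrow> i {s, t} = {}) \<and>
     \<comment> \<open>P6\<close>
     (\<forall>t\<in>X. \<forall>a s. lev_succ a (lvl t) \<and> strict le s t \<longrightarrow>
          (\<exists>v\<in>X. lvl v = a \<and> (s, v) \<in> le \<and> strict le v t)) \<and>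
     \<comment> \<open>P7: i maps [X]^2 into [X]^{<omega}\<close>
     (\<forall>e. (\<exists>x\<in>X. \<exists>y\<in>X. x \<noteq> y \<and> e = {x, y}) \<longrightarrow> i e \<subseteq> X \<and> finite (i e)) \<and>
     (\<forall>e. \<not> (\<exists>x\<in>X. \<exists>y\<in>X. x \<noteq> y \<and> e = {x, y}) \<longrightarrow> i e = {}) \<and>
     (\<forall>x y. strict le x y \<longrightarrow> i {x, y} = {x}) \<and>
     (\<forall>x\<in>X. \<forall>y\<in>X. (x, y) \<notin> le \<and> (y, x) \<notin> le \<longrightarrow>
        (\<forall>u\<in>X. ((u, x) \<in> le \<and> (u, y) \<in> le) \<longleftrightarrow> (\<exists>v\<in>i {x, y}. (u, v) \<in> le)) \<and>
        (\<forall>z z'. blk_of x = Bk z \<and> blk_of y = Bk z' \<and>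
            lvl x \<in> {W1, W1s} \<and> lvl y \<in> {W1, W1s} \<and> z \<noteq> z' \<longrightarrow>
            (\<forall>v\<in>i {x, y}. \<exists>\<gamma>. lvl v = Ctbl \<gamma> \<and> \<gamma> < F {z, z'}))))"

definition Pset :: "('l set \<Rightarrow> 'c::wellorder) \<Rightarrow> ('c,'l) cond set" where
  "Pset F = {p. Pcond F p}"

definition Pleq :: "('c,'l) cond \<Rightarrow> ('c,'l) cond \<Rightarrow> bool" where
  "Pleq q p \<longleftrightarrow> (case q of (X', le', i') \<Rightarrow> case p of (X, le, i) \<Rightarrow>
      X \<subseteq> X' \<and> le = le' \<inter> (X \<times> X) \<and>
      (\<forall>x\<in>X. \<forall>y\<in>X. x \<noteq> y \<longrightarrow> i' {x, y} = i {x, y}))"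

definition compatible :: "('l set \<Rightarrow> 'c::wellorder) \<Rightarrow> ('c,'l) cond \<Rightarrow> ('c,'l) cond \<Rightarrow> bool" where
  "compatible F p q \<longleftrightarrow> (\<exists>r\<in>Pset F. Pleq r p \<and> Pleq r q)"

definition ccc :: "('l set \<Rightarrow> 'c::wellorder) \<Rightarrow> bool" where
  "ccc F \<longleftrightarrow> (\<forall>A \<subseteq> Pset F. (\<forall>p\<in>A. \<forall>q\<in>A. p \<noteq> q \<longrightarrow> \<not> compatible F p q) \<longrightarrow> countable A)"

end

theory Submission
  imports Defs
begin


lemma uncountable_fiber:
  assumes "uncountable I" "countable (g ` I)"
  shows "\<exists>c. uncountable {i\<in>I. g i = c}"
proof (rule ccontr)
  assume "\<not> ?thesis"
  hence "\<forall>c\<in>g ` I. countable {i\<in>I. g i = c}" by auto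
  hence "countable (\<Union>c\<in>g ` I. {i\<in>I. g i = c})" using assms(2) by (intro countable_UN) auto
  moreover have "(\<Union>c\<in>g ` I. {i\<in>I. g i = c}) = I" by auto
  ultimately show False using assms(1) by simp
qed

lemma uncountable_fiber2:
  assumes "uncountable I" "countable C" "\<And>i. i \<in> I \<Longrightarrow> g i \<in> C"
  shows "\<exists>c. uncountable {i\<in>I. g i = c}"
proof -
  have "g ` I \<subseteq> C" using assms(3) by blast
  hence "countable (g ` I)" using assms(2) by (rule countable_subset)
  thus ?thesis by (rule uncountable_fiber[OF assms(1)])
qed

lemma delta_n:
  "\<forall>(I::'i set) (f::'i \<Rightarrow> 'k set). uncountable I \<longrightarrow> (\<forall>i\<in>I. finite (f i) \<and> card (f i) = n) \<longrightarrow>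
     (\<exists>J\<subseteq>I. uncountable J \<and> (\<exists>K. \<forall>i\<in>J. \<forall>j\<in>J. i \<noteq> j \<longrightarrow> f i \<inter> f j = K))"
proof (induction n)
  case 0
  show ?case
  proof (intro allI impI)
    fix I :: "'i set" and f :: "'i \<Rightarrow> 'k set"
    show "uncountable I \<Longrightarrow> \<forall>i\<in>I. finite (f i) \<and> card (f i) = 0 \<Longrightarrow> \<exists>J\<subseteq>I. uncountable J \<and> (\<exists>K. \<forall>i\<in>J. \<forall>j\<in>J. i \<noteq> j \<longrightarrow> f i \<inter> f j = K)"
    proof -
      assume a: "uncountable I" "\<forall>i\<in>I. finite (f i) \<and> card (f i) = 0"
      have "\<forall>i\<in>I. f i = {}" using a(2) by auto
      hence "\<forall>i\<in>I. \<forall>j\<in>I. i \<noteq> j \<longrightarrow> f i \<inter> f j = {}" by simp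
      thus ?thesis using a(1) by blast
    qed
  qed
next
  case (Suc n)
  show ?case
  proof (intro allI impI)
    fix I :: "'i set" and f :: "'i \<Rightarrow> 'k set"
    assume I: "uncountable I" and fI: "\<forall>i\<in>I. finite (f i) \<and> card (f i) = Suc n"
    show "\<exists>J\<subseteq>I. uncountable J \<and> (\<exists>K. \<forall>i\<in>J. \<forall>j\<in>J. i \<noteq> j \<longrightarrow> f i \<inter> f j = K)"
    proof (cases "\<exists>k. uncountable {i\<in>I. k \<in> f i}")
      case True
      then obtain k where k: "uncountable {i\<in>I. k \<in> f i}" by blast
      have "\<forall>i\<in>{i\<in>I. k \<in> f i}. finite (f i - {k}) \<and> card (f i - {k}) = n"
        using fI by auto
      note ex = mp[OF mp[OF spec[OF spec[OF Suc.IH, of "{i\<in>I. k \<in> f i}"], of "\<lambda>i. f i - {k}"] k] this]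
      obtain J where J0: "J \<subseteq> {i\<in>I. k \<in> f i} \<and> uncountable J \<and> (\<exists>K. \<forall>i\<in>J. \<forall>j\<in>J. i \<noteq> j \<longrightarrow> (f i - {k}) \<inter> (f j - {k}) = K)"
        using ex by (rule exE)
      then obtain K where K: "\<forall>i\<in>J. \<forall>j\<in>J. i \<noteq> j \<longrightarrow> (f i - {k}) \<inter> (f j - {k}) = K"
        by (elim conjE exE)
      have J: "J \<subseteq> {i\<in>I. k \<in> f i}" "uncountable J" using J0 by simp_all
      have "\<forall>i\<in>J. \<forall>j\<in>J. i \<noteq> j \<longrightarrow> f i \<inter> f j = insert k K"
      proof (intro ballI impI)
        fix i j assume "i \<in> J" "j \<in> J" "i \<noteq> j"
        hence "(f i - {k}) \<inter> (f j - {k}) = K" "k \<in> f i" "k \<in> f j" using K J by auto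
        thus "f i \<inter> f j = insert k K" by blast
      qed
      moreover have "J \<subseteq> I" using J by blast
      ultimately show ?thesis using J by blast
    next
      case False
      hence cnt: "\<And>k. countable {i\<in>I. k \<in> f i}" by simp
      define D where "D = {J. J \<subseteq> I \<and> (\<forall>i\<in>J. \<forall>j\<in>J. i \<noteq> j \<longrightarrow> f i \<inter> f j = {})}"
      have "\<forall>C\<in>chains D. \<Union>C \<in> D"
      proof
        fix C assume C: "C \<in> chains D"
        show "\<Union>C \<in> D" unfolding D_def
        proof (intro CollectI conjI ballI impI)
          show "\<Union>C \<subseteq> I" using C by (auto simp: chains_def D_def)
        next
          fix i j assume "i \<in> \<Union>C" "j \<in> \<Union>C" "i \<noteq> j"
          then obtain A B where AB: "A \<in> C" "B \<in> C" "i \<in> A" "j \<in> B" by blast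
          from C have "A \<subseteq> B \<or> B \<subseteq> A" using AB by (auto simp: chains_def chain_subset_def)
          hence "\<exists>Z\<in>C. i \<in> Z \<and> j \<in> Z" using AB by blast
          then obtain Z where Z: "Z \<in> C" "i \<in> Z" "j \<in> Z" by blast
          have "Z \<in> D" using Z(1) C by (auto simp: chains_def)
          thus "f i \<inter> f j = {}" using Z \<open>i \<noteq> j\<close> by (simp add: D_def)
        qed
      qed
      from Zorn_Lemma[OF this] obtain M where M: "M \<in> D" "\<And>X. X \<in> D \<Longrightarrow> M \<subseteq> X \<Longrightarrow> X = M"
        by blast
      have "uncountable M"
      proof
        assume cM: "countable M"
        have fin: "\<And>i. i \<in> M \<Longrightarrow> finite (f i)" using M(1) fI by (auto simp: D_def)
        have cU: "countable (\<Union>i\<in>M. f i)"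
          using cM fin by (intro countable_UN) (auto intro: countable_finite)
        have "countable (\<Union>k\<in>(\<Union>i\<in>M. f i). {i\<in>I. k \<in> f i})"
          using cU cnt by (rule countable_UN)
        moreover have "countable (M \<union> (\<Union>k\<in>(\<Union>i\<in>M. f i). {i\<in>I. k \<in> f i}))"
          using calculation cM by simp
        ultimately have "\<not> I \<subseteq> M \<union> (\<Union>k\<in>(\<Union>i\<in>M. f i). {i\<in>I. k \<in> f i})"
          using I countable_subset by blast
        then obtain i where i: "i \<in> I" "i \<notin> M \<union> (\<Union>k\<in>(\<Union>i\<in>M. f i). {i\<in>I. k \<in> f i})"
          by blast
        have "insert i M \<in> D" using M(1) i unfolding D_def by auto
        with M(2) have "insert i M = M" by blast
        with i show False by blast
      qed
      moreover have "M \<subseteq> I" "\<forall>i\<in>M. \<forall>j\<in>M. i \<noteq> j \<longrightarrow> f i \<inter> f j = {}" using M(1) by (auto simp: D_def)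
      ultimately show ?thesis by blast
    qed
  qed
qed

lemma delta_system:
  fixes f :: "'i \<Rightarrow> 'k set"
  assumes "uncountable I" "\<forall>i\<in>I. finite (f i)"
  shows "\<exists>J\<subseteq>I. uncountable J \<and> (\<exists>K. \<forall>i\<in>J. \<forall>j\<in>J. i \<noteq> j \<longrightarrow> f i \<inter> f j = K)"
proof -
  obtain n where n: "uncountable {i\<in>I. card (f i) = n}"
    using uncountable_fiber2[OF assms(1), of UNIV "\<lambda>i. card (f i)"] by auto
  have "\<exists>J\<subseteq>{i\<in>I. card (f i) = n}. uncountable J \<and> (\<exists>K. \<forall>i\<in>J. \<forall>j\<in>J. i \<noteq> j \<longrightarrow> f i \<inter> f j = K)"
    by (rule delta_n[rule_format, OF n]) (use assms(2) in simp)
  then obtain J where J0: "J \<subseteq> {i\<in>I. card (f i) = n} \<and> uncountable J \<and> (\<exists>K. \<forall>i\<in>J. \<forall>j\<in>J. i \<noteq> j \<longrightarrow> f i \<inter> f j = K)"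
    by (rule exE)
  have J1: "J \<subseteq> I" using conjunct1[OF J0] by blast
  show ?thesis using J1 conjunct2[OF J0] by (intro exI[of _ J]) simp
qed

lemma omega1_inj:
  fixes B :: "'x set"
  assumes om: "is_omega1_type TYPE('c::wellorder)" and B: "uncountable B"
  shows "\<exists>f::'c \<Rightarrow> 'x. inj f \<and> range f \<subseteq> B"
proof -
  define R where "R = {(x::'c, y). x < y}"
  have wfR: "wf R" unfolding R_def by (rule wf)
  define G where "G = (\<lambda>(g::'c \<Rightarrow> 'x) (x::'c). SOME b. b \<in> B \<and> b \<notin> g ` {y. y < x})"
  define f where "f = wfrec R G"
  have cnt: "\<And>x::'c. countable {y. y < x}" using om by (simp add: is_omega1_type_def)
  have fx: "f x \<in> B \<and> f x \<notin> f ` {y. y < x}" for x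
  proof -
    have "f x = G (cut f R x) x" unfolding f_def by (rule wfrec[OF wfR])
    moreover have "cut f R x ` {y. y < x} = f ` {y. y < x}"
      by (auto simp: cut_apply R_def)
    ultimately have eq: "f x = (SOME b. b \<in> B \<and> b \<notin> f ` {y. y < x})" by (simp add: G_def)
    have "countable (f ` {y. y < x})" using cnt by blast
    hence "\<not> B \<subseteq> f ` {y. y < x}" using B countable_subset by blast
    hence "\<exists>b. b \<in> B \<and> b \<notin> f ` {y. y < x}" by blast
    thus ?thesis unfolding eq by (rule someI_ex)
  qed
  have "inj f"
  proof (rule injI)
    fix x y assume "f x = f y"
    show "x = y"
    proof (rule ccontr)
      assume "x \<noteq> y"
      hence "x < y \<or> y < x" by auto
      thus False
      proof
        assume "x < y" hence "f x \<in> f ` {z. z < y}" by blast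
        thus False using fx[of y] \<open>f x = f y\<close> by simp
      next
        assume "y < x" hence "f y \<in> f ` {z. z < x}" by blast
        thus False using fx[of x] \<open>f x = f y\<close> by simp
      qed
    qed
  qed
  thus ?thesis using fx by blast
qed

lemma omega1_subset:
  fixes B :: "'x set"
  assumes om: "is_omega1_type TYPE('c::wellorder)" and B: "uncountable B"
  shows "\<exists>B'\<subseteq>B. ordIso2 (card_of B') (card_of (UNIV::'c set))"
proof -
  obtain f :: "'c \<Rightarrow> 'x" where f: "inj f" "range f \<subseteq> B" using omega1_inj[OF om B] by blast
  have b: "bij_betw f UNIV (range f)" using f(1) by (simp add: bij_betw_def)
  have "ordIso2 (card_of (UNIV::'c set)) (card_of (range f))" unfolding card_of_ordIso[symmetric] using b by blast
  hence "ordIso2 (card_of (range f)) (card_of (UNIV::'c set))" by (rule ordIso_symmetric)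
  thus ?thesis using f(2) by (intro exI[of _ "range f"]) simp
qed




lemma lev_less_trans: "lev_less a b \<Longrightarrow> lev_less b c \<Longrightarrow> lev_less a c"
  by (cases a; cases b; cases c) auto

lemma lev_less_irrefl: "\<not> lev_less a a"
  by (cases a) auto

lemma lev_less_Ctbl: "lev_less a (Ctbl b) \<Longrightarrow> \<exists>g. a = Ctbl g \<and> g < b"
  by (cases a) auto

lemma lev_less_W1: "lev_less a W1 \<Longrightarrow> \<exists>g. a = Ctbl g"
  by (cases a) auto

lemma lev_less_W1s_from: "lev_less W1s a \<Longrightarrow> False"
  by (cases a) auto

lemma lev_less_W1_from: "lev_less W1 a \<Longrightarrow> a = W1s"
  by (cases a) auto

locale cnd =
  fixes F :: "'l set \<Rightarrow> 'c::wellorder" and X :: "('c,'l) node set"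
    and le :: "('c,'l) node rel" and i :: "('c,'l) node set \<Rightarrow> ('c,'l) node set"
  assumes P: "Pcond F (X, le, i)"
begin

lemma fin: "finite X" using P by (simp add: Pcond_def)
lemma le_sub: "le \<subseteq> X \<times> X" using P by (simp add: Pcond_def)
lemma po: "partial_order_on X le" using P by (simp add: Pcond_def)
lemma leX: "(x,y) \<in> le \<Longrightarrow> x \<in> X \<and> y \<in> X" using le_sub by blast
lemma refl: "x \<in> X \<Longrightarrow> (x,x) \<in> le"
  using po by (auto simp: partial_order_on_def preorder_on_def refl_on_def)
lemma trans: "(x,y) \<in> le \<Longrightarrow> (y,z) \<in> le \<Longrightarrow> (x,z) \<in> le"
  using po unfolding partial_order_on_def preorder_on_def trans_def by blast
lemma antisym: "(x,y) \<in> le \<Longrightarrow> (y,x) \<in> le \<Longrightarrow> x = y"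
  using po unfolding partial_order_on_def antisym_def by blast
lemma lev: "strict le x y \<Longrightarrow> lev_less (lvl x) (lvl y)"
  using P by (simp add: Pcond_def)
lemma lev2: "(x,y) \<in> le \<Longrightarrow> x \<noteq> y \<Longrightarrow> lev_less (lvl x) (lvl y)"
  using lev by (simp add: strict_def)
lemma P3: "x \<in> X \<Longrightarrow> blk_of x = Bk z \<Longrightarrow> Tp z \<in> X"
  using P unfolding Pcond_def by auto
lemma P4a: "Md z n \<in> X \<Longrightarrow> strict le (Md z n) (Tp z)"
  using P by (simp add: Pcond_def)
lemma P4b: "Md z n \<in> X \<Longrightarrow> \<xi> \<noteq> z \<Longrightarrow> Tp \<xi> \<in> X \<Longrightarrow> \<not> strict le (Md z n) (Tp \<xi>)"
  using P by (simp add: Pcond_def)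
lemma P5: "s \<in> X \<Longrightarrow> t \<in> X \<Longrightarrow> s \<noteq> t \<Longrightarrow> blk_of s = blk_of t \<Longrightarrow> lvl s = lvl t \<Longrightarrow> i {s,t} = {}"
  using P by (simp add: Pcond_def)
lemma P6: "t \<in> X \<Longrightarrow> lev_succ a (lvl t) \<Longrightarrow> strict le s t \<Longrightarrow>
    \<exists>v\<in>X. lvl v = a \<and> (s, v) \<in> le \<and> strict le v t"
  using P by (simp add: Pcond_def)
lemma P7dom: "x \<in> X \<Longrightarrow> y \<in> X \<Longrightarrow> x \<noteq> y \<Longrightarrow> i {x,y} \<subseteq> X \<and> finite (i {x,y})"
proof -
  assume a: "x \<in> X" "y \<in> X" "x \<noteq> y"
  have "\<forall>e. (\<exists>x\<in>X. \<exists>y\<in>X. x \<noteq> y \<and> e = {x, y}) \<longrightarrow> i e \<subseteq> X \<and> finite (i e)"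
    using P by (simp add: Pcond_def)
  thus ?thesis using a by blast
qed
lemma P7out: "\<not> (\<exists>x\<in>X. \<exists>y\<in>X. x \<noteq> y \<and> e = {x, y}) \<Longrightarrow> i e = {}"
  using P by (simp add: Pcond_def)
lemma P7s: "strict le x y \<Longrightarrow> i {x,y} = {x}"
  using P by (simp add: Pcond_def)
lemma P7a: "x \<in> X \<Longrightarrow> y \<in> X \<Longrightarrow> (x,y) \<notin> le \<Longrightarrow> (y,x) \<notin> le \<Longrightarrow> u \<in> X \<Longrightarrow>
   ((u,x) \<in> le \<and> (u,y) \<in> le) \<longleftrightarrow> (\<exists>v\<in>i {x,y}. (u,v) \<in> le)"
  using P by (simp add: Pcond_def)
lemma P7b: "x \<in> X \<Longrightarrow> y \<in> X \<Longrightarrow> (x,y) \<notin> le \<Longrightarrow> (y,x) \<notin> le \<Longrightarrow>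
   blk_of x = Bk z \<Longrightarrow> blk_of y = Bk z' \<Longrightarrow> lvl x \<in> {W1, W1s} \<Longrightarrow> lvl y \<in> {W1, W1s} \<Longrightarrow> z \<noteq> z' \<Longrightarrow>
   v \<in> i {x,y} \<Longrightarrow> \<exists>g. lvl v = Ctbl g \<and> g < F {z, z'}"
  using P by (simp add: Pcond_def)

lemma P7a_le: "x \<in> X \<Longrightarrow> y \<in> X \<Longrightarrow> (x,y) \<notin> le \<Longrightarrow> (y,x) \<notin> le \<Longrightarrow> v \<in> i {x,y} \<Longrightarrow>
  (v,x) \<in> le \<and> (v,y) \<in> le"
proof -
  assume a: "x \<in> X" "y \<in> X" "(x,y) \<notin> le" "(y,x) \<notin> le" "v \<in> i {x,y}"
  hence "x \<noteq> y" using refl by blast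
  hence vX: "v \<in> X" using P7dom a by blast
  hence "(v,v) \<in> le" by (rule refl)
  thus ?thesis using P7a[OF a(1-4) vX] a(5) by blast
qed

end




definition Lrel :: "'a rel \<Rightarrow> 'a rel \<Rightarrow> 'a rel" where
  "Lrel le le' = le \<union> le' \<union> le O le' \<union> le' O le"

definition Mix :: "'a set \<Rightarrow> 'a rel \<Rightarrow> 'a set \<Rightarrow> 'a set" where
  "Mix XX L e = (if \<exists>a\<in>e. \<forall>b\<in>e. (a,b) \<in> L then {a\<in>e. \<forall>b\<in>e. (a,b) \<in> L}
                 else {w\<in>XX. \<forall>b\<in>e. (w,b) \<in> L})"

definition Iam :: "'a set \<Rightarrow> 'a rel \<Rightarrow> ('a set \<Rightarrow> 'a set) \<Rightarrow> 'a set \<Rightarrow> 'a rel \<Rightarrow> ('a set \<Rightarrow> 'a set) \<Rightarrow> 'a set \<Rightarrow> 'a set" where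
  "Iam X le i X' le' i' e = (if e \<subseteq> X then i e else if e \<subseteq> X' then i' e
      else if e \<subseteq> X \<union> X' \<and> card e = 2 then Mix (X \<union> X') (Lrel le le') e else {})"

lemma Lrel_sym: "Lrel le' le = Lrel le le'"
  unfolding Lrel_def by blast

locale amalg = p: cnd F X le i + q: cnd F X' le' i' for F X le i X' le' i' +
  fixes \<delta> :: "'c::wellorder"
  assumes A1: "x \<in> X \<Longrightarrow> x \<in> X' \<Longrightarrow> y \<in> X \<Longrightarrow> y \<in> X' \<Longrightarrow> (x,y) \<in> le \<longleftrightarrow> (x,y) \<in> le'"
  and A2: "x \<in> X \<Longrightarrow> x \<in> X' \<Longrightarrow> y \<in> X \<Longrightarrow> y \<in> X' \<Longrightarrow> x \<noteq> y \<Longrightarrow> i {x,y} = i' {x,y}"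
  and A3: "x \<in> X \<Longrightarrow> y \<in> X' \<Longrightarrow> blk_of x = blk_of y \<Longrightarrow> lvl x = lvl y \<Longrightarrow> x \<in> X' \<and> y \<in> X"
  and A4: "r \<in> X \<Longrightarrow> r \<in> X' \<Longrightarrow> lvl r = Ctbl g \<Longrightarrow> g \<le> \<delta>"
  and A5: "Tp z \<in> X \<Longrightarrow> Tp z \<notin> X' \<Longrightarrow> Tp z' \<in> X' \<Longrightarrow> Tp z' \<notin> X \<Longrightarrow> \<delta> < F {z, z'}"
begin

abbreviation "L \<equiv> Lrel le le'"

lemma swap: "amalg F X' le' i' X le i \<delta>"
proof
  show "\<And>x y. x \<in> X' \<Longrightarrow> x \<in> X \<Longrightarrow> y \<in> X' \<Longrightarrow> y \<in> X \<Longrightarrow> (x, y) \<in> le' \<longleftrightarrow> (x, y) \<in> le"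
    using A1 by blast
  show "\<And>x y. x \<in> X' \<Longrightarrow> x \<in> X \<Longrightarrow> y \<in> X' \<Longrightarrow> y \<in> X \<Longrightarrow> x \<noteq> y \<Longrightarrow> i' {x, y} = i {x, y}"
    using A2 by metis
  show "\<And>x y. x \<in> X' \<Longrightarrow> y \<in> X \<Longrightarrow> blk_of x = blk_of y \<Longrightarrow> lvl x = lvl y \<Longrightarrow> x \<in> X \<and> y \<in> X'"
    using A3 by metis
  show "\<And>r g. r \<in> X' \<Longrightarrow> r \<in> X \<Longrightarrow> lvl r = Ctbl g \<Longrightarrow> g \<le> \<delta>"
    using A4 by metis
  show "\<And>z z'. Tp z \<in> X' \<Longrightarrow> Tp z \<notin> X \<Longrightarrow> Tp z' \<in> X \<Longrightarrow> Tp z' \<notin> X' \<Longrightarrow> \<delta> < F {z, z'}"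
    using A5 by (metis insert_commute)
qed

lemma m1: "(a,b) \<in> le' \<Longrightarrow> a \<in> X \<Longrightarrow> b \<in> X \<Longrightarrow> (a,b) \<in> le"
  using A1 q.leX by blast
lemma m2: "(a,b) \<in> le \<Longrightarrow> a \<in> X' \<Longrightarrow> b \<in> X' \<Longrightarrow> (a,b) \<in> le'"
  using A1 p.leX by blast

lemma L_sub: "L \<subseteq> (X \<union> X') \<times> (X \<union> X')"
  unfolding Lrel_def using p.le_sub q.le_sub by blast

lemma L_refl: "x \<in> X \<union> X' \<Longrightarrow> (x,x) \<in> L"
  unfolding Lrel_def using p.refl q.refl by blast

lemma L_restr: "x \<in> X \<Longrightarrow> y \<in> X \<Longrightarrow> (x,y) \<in> L \<longleftrightarrow> (x,y) \<in> le"
proof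
  assume xy: "x \<in> X" "y \<in> X" and "(x,y) \<in> L"
  hence "(x,y) \<in> le \<or> (x,y) \<in> le' \<or> (\<exists>r. (x,r) \<in> le \<and> (r,y) \<in> le') \<or> (\<exists>r. (x,r) \<in> le' \<and> (r,y) \<in> le)"
    unfolding Lrel_def by blast
  thus "(x,y) \<in> le"
  proof (elim disjE exE conjE)
    assume "(x,y) \<in> le'" thus ?thesis using m1 xy by blast
  next
    fix r assume a: "(x,r) \<in> le" "(r,y) \<in> le'"
    hence "(r,y) \<in> le" using m1 p.leX xy by blast
    thus ?thesis using a p.trans by blast
  next
    fix r assume a: "(x,r) \<in> le'" "(r,y) \<in> le"
    hence "(x,r) \<in> le" using m1 p.leX xy by blast
    thus ?thesis using a p.trans by blast
  qed
next
  assume "(x,y) \<in> le" thus "(x,y) \<in> L" unfolding Lrel_def by blast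
qed

lemma D_top: "(w,a) \<in> L \<Longrightarrow> a \<in> X \<Longrightarrow> (w,a) \<in> le \<or> (\<exists>c. c \<in> X \<and> c \<in> X' \<and> (w,c) \<in> le' \<and> (c,a) \<in> le)"
proof -
  assume wa: "(w,a) \<in> L" and a: "a \<in> X"
  hence "(w,a) \<in> le \<or> (w,a) \<in> le' \<or> (\<exists>r. (w,r) \<in> le \<and> (r,a) \<in> le') \<or> (\<exists>r. (w,r) \<in> le' \<and> (r,a) \<in> le)"
    unfolding Lrel_def by blast
  thus ?thesis
  proof (elim disjE exE conjE)
    assume "(w,a) \<in> le'" thus ?thesis using a q.leX p.refl by blast
  next
    fix r assume b: "(w,r) \<in> le" "(r,a) \<in> le'"
    hence "(r,a) \<in> le" using m1 p.leX a by blast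
    thus ?thesis using b p.trans by blast
  next
    fix r assume b: "(w,r) \<in> le'" "(r,a) \<in> le"
    thus ?thesis using p.leX q.leX by blast
  qed simp
qed

lemma D_bot: "(w,a) \<in> L \<Longrightarrow> w \<in> X \<Longrightarrow> (w,a) \<in> le \<or> (\<exists>c. c \<in> X \<and> c \<in> X' \<and> (w,c) \<in> le \<and> (c,a) \<in> le')"
proof -
  assume wa: "(w,a) \<in> L" and a: "w \<in> X"
  hence "(w,a) \<in> le \<or> (w,a) \<in> le' \<or> (\<exists>r. (w,r) \<in> le \<and> (r,a) \<in> le') \<or> (\<exists>r. (w,r) \<in> le' \<and> (r,a) \<in> le)"
    unfolding Lrel_def by blast
  thus ?thesis
  proof (elim disjE exE conjE)
    assume "(w,a) \<in> le'" thus ?thesis using a q.leX p.refl by blast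
  next
    fix r assume b: "(w,r) \<in> le" "(r,a) \<in> le'"
    thus ?thesis using p.leX q.leX by blast
  next
    fix r assume b: "(w,r) \<in> le'" "(r,a) \<in> le"
    hence "(w,r) \<in> le" using m1 p.leX a by blast
    thus ?thesis using b p.trans by blast
  qed simp
qed

lemma L_trans: "(x,y) \<in> L \<Longrightarrow> (y,z) \<in> L \<Longrightarrow> (x,z) \<in> L"
proof -
  assume xy: "(x,y) \<in> L" and yz: "(y,z) \<in> L"
  have yX: "y \<in> X \<union> X'" using xy L_sub by blast
  show ?thesis
  proof (cases "y \<in> X")
    case True
    from D_top[OF xy True] D_bot[OF yz True] show ?thesis
    proof (elim disjE exE conjE)
      assume "(x,y) \<in> le" "(y,z) \<in> le" thus ?thesis using p.trans unfolding Lrel_def by blast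
    next
      fix c assume "(x,y) \<in> le" "c \<in> X" "c \<in> X'" "(y,c) \<in> le" "(c,z) \<in> le'"
      thus ?thesis using p.trans unfolding Lrel_def by blast
    next
      fix c assume "c \<in> X" "c \<in> X'" "(x,c) \<in> le'" "(c,y) \<in> le" "(y,z) \<in> le"
      thus ?thesis using p.trans unfolding Lrel_def by blast
    next
      fix c d assume a: "c \<in> X" "c \<in> X'" "(x,c) \<in> le'" "(c,y) \<in> le" "d \<in> X" "d \<in> X'" "(y,d) \<in> le" "(d,z) \<in> le'"
      hence "(c,d) \<in> le" using p.trans by blast
      hence "(c,d) \<in> le'" using m2 a by blast
      hence "(x,z) \<in> le'" using a q.trans by blast
      thus ?thesis unfolding Lrel_def by blast
    qed
  next
    case False
    hence yX': "y \<in> X'" using yX by blast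
    interpret s: amalg F X' le' i' X le i \<delta> by (rule swap)
    have xy': "(x,y) \<in> s.L" "(y,z) \<in> s.L" using xy yz Lrel_sym by metis+
    from s.D_top[OF xy'(1) yX'] s.D_bot[OF xy'(2) yX'] show ?thesis
    proof (elim disjE exE conjE)
      assume "(x,y) \<in> le'" "(y,z) \<in> le'" thus ?thesis using q.trans unfolding Lrel_def by blast
    next
      fix c assume "(x,y) \<in> le'" "c \<in> X" "c \<in> X'" "(y,c) \<in> le'" "(c,z) \<in> le"
      thus ?thesis using q.trans unfolding Lrel_def by blast
    next
      fix c assume "c \<in> X" "c \<in> X'" "(x,c) \<in> le" "(c,y) \<in> le'" "(y,z) \<in> le'"
      thus ?thesis using q.trans unfolding Lrel_def by blast
    next
      fix c d assume a: "c \<in> X'" "c \<in> X" "(x,c) \<in> le" "(c,y) \<in> le'" "d \<in> X'" "d \<in> X" "(y,d) \<in> le'" "(d,z) \<in> le"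
      hence "(c,d) \<in> le'" using q.trans by blast
      hence "(c,d) \<in> le" using m1 a by blast
      hence "(x,z) \<in> le" using a p.trans by blast
      thus ?thesis unfolding Lrel_def by blast
    qed
  qed
qed

lemma L_lev: "(x,y) \<in> L \<Longrightarrow> x = y \<or> lev_less (lvl x) (lvl y)"
proof -
  assume "(x,y) \<in> L"
  hence "(x,y) \<in> le \<or> (x,y) \<in> le' \<or> (\<exists>r. (x,r) \<in> le \<and> (r,y) \<in> le') \<or> (\<exists>r. (x,r) \<in> le' \<and> (r,y) \<in> le)"
    unfolding Lrel_def by blast
  thus ?thesis
  proof (elim disjE exE conjE)
    fix r assume "(x,r) \<in> le" "(r,y) \<in> le'"
    thus ?thesis using p.lev2 q.lev2 lev_less_trans by metis
  next
    fix r assume "(x,r) \<in> le'" "(r,y) \<in> le"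
    thus ?thesis using p.lev2 q.lev2 lev_less_trans by metis
  qed (use p.lev2 q.lev2 in blast)+
qed

lemma L_antisym: "(x,y) \<in> L \<Longrightarrow> (y,x) \<in> L \<Longrightarrow> x = y"
  using L_lev lev_less_trans lev_less_irrefl by metis

lemma K: "a \<in> X \<Longrightarrow> b \<in> X \<Longrightarrow> (w,a) \<in> L \<Longrightarrow> (w,b) \<in> L \<Longrightarrow>
  \<exists>c\<in>X. (w,c) \<in> L \<and> (c,a) \<in> le \<and> (c,b) \<in> le"
proof -
  assume a: "a \<in> X" "b \<in> X" and wa: "(w,a) \<in> L" and wb: "(w,b) \<in> L"
  from D_top[OF wa a(1)] D_top[OF wb a(2)] show ?thesis
  proof (elim disjE exE conjE)
    assume "(w,a) \<in> le" "(w,b) \<in> le"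
    thus ?thesis using p.leX p.refl L_refl by blast
  next
    fix c assume h: "(w,a) \<in> le" "c \<in> X" "c \<in> X'" "(w,c) \<in> le'" "(c,b) \<in> le"
    hence "(w,c) \<in> le" using m1 p.leX by blast
    thus ?thesis using h p.leX L_refl p.trans by blast
  next
    fix c assume h: "(w,b) \<in> le" "c \<in> X" "c \<in> X'" "(w,c) \<in> le'" "(c,a) \<in> le"
    hence "(w,c) \<in> le" using m1 p.leX by blast
    thus ?thesis using h p.leX L_refl p.trans by blast
  next
    fix c d assume h: "c \<in> X" "c \<in> X'" "(w,c) \<in> le'" "(c,a) \<in> le" "d \<in> X" "d \<in> X'" "(w,d) \<in> le'" "(d,b) \<in> le"
    show ?thesis
    proof (cases "(c,d) \<in> le'")
      case True
      hence "(c,d) \<in> le" using m1 h by blast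
      hence "(c,b) \<in> le" using h p.trans by blast
      moreover have "(w,c) \<in> L" using h unfolding Lrel_def by blast
      ultimately show ?thesis using h by blast
    next
      case cd: False
      show ?thesis
      proof (cases "(d,c) \<in> le'")
        case True
        hence "(d,c) \<in> le" using m1 h by blast
        hence "(d,a) \<in> le" using h p.trans by blast
        moreover have "(w,d) \<in> L" using h unfolding Lrel_def by blast
        ultimately show ?thesis using h by blast
      next
        case dc: False
        have wX: "w \<in> X'" using h q.leX by blast
        from q.P7a[OF h(2) h(6) cd dc wX] h(3,7) obtain v where v: "v \<in> i' {c,d}" "(w,v) \<in> le'" by blast
        have "c \<noteq> d" using cd q.refl h by blast
        hence iv: "i' {c,d} = i {c,d}" using A2 h by metis
        have "(c,d) \<notin> le" "(d,c) \<notin> le" using cd dc m2 h by blast+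
        hence vcd: "(v,c) \<in> le \<and> (v,d) \<in> le" using p.P7a_le h v(1) iv by metis
        hence "v \<in> X" using p.leX by blast
        moreover have "(w,v) \<in> L" using v unfolding Lrel_def by blast
        ultimately show ?thesis using vcd h p.trans by blast
      qed
    qed
  qed
qed

end



lemma pair_ex: "(\<exists>x\<in>A. \<exists>y\<in>A. x \<noteq> y \<and> e = {x,y}) \<Longrightarrow> \<exists>x y. x \<noteq> y \<and> e = {x,y}"
  by (elim bexE conjE exI) (intro exI conjI)

lemma card2: "card e = 2 \<Longrightarrow> \<exists>x y. x \<noteq> y \<and> e = {x,y}"
  by (metis card_2_iff)

lemma lvl_W1: "lvl v = W1 \<Longrightarrow> \<exists>z n. v = Md z n" by (cases v) auto
lemma lvl_W1s: "lvl v = W1s \<Longrightarrow> \<exists>z. v = Tp z" by (cases v) auto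

context amalg begin

abbreviation "I \<equiv> Iam X le i X' le' i'"

lemma I_swap: "Iam X' le' i' X le i = I"
proof
  fix e
  show "Iam X' le' i' X le i e = I e"
  proof (cases "e \<subseteq> X \<and> e \<subseteq> X'")
    case True
    show ?thesis
    proof (cases "\<exists>x y. x \<noteq> y \<and> e = {x,y}")
      case True
      then obtain x y where "x \<noteq> y" "e = {x,y}" by blast
      moreover hence "x \<in> X" "x \<in> X'" "y \<in> X" "y \<in> X'" using \<open>e \<subseteq> X \<and> e \<subseteq> X'\<close> by auto
      ultimately have "i e = i' e" using A2[of x y] by simp
      thus ?thesis using \<open>e \<subseteq> X \<and> e \<subseteq> X'\<close> by (simp add: Iam_def)
    next
      case False
      have "\<not> (\<exists>x\<in>X. \<exists>y\<in>X. x \<noteq> y \<and> e = {x,y})" using False pair_ex[of X e] by blast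
      moreover have "\<not> (\<exists>x\<in>X'. \<exists>y\<in>X'. x \<noteq> y \<and> e = {x,y})" using False pair_ex[of X' e] by blast
      ultimately have "i e = {}" "i' e = {}" using p.P7out q.P7out by simp_all
      thus ?thesis using True by (simp add: Iam_def)
    qed
  next
    case False
    show ?thesis
    proof (cases "e \<subseteq> X")
      case True thus ?thesis using False by (simp add: Iam_def)
    next
      case False2: False
      show ?thesis
      proof (cases "e \<subseteq> X'")
        case True thus ?thesis using False2 by (simp add: Iam_def)
      next
        case False thus ?thesis using False2 by (simp add: Iam_def Lrel_sym Un_commute)
      qed
    qed
  qed
qed

lemma lev_below: "(v,c) \<in> L \<Longrightarrow> lvl c = Ctbl g \<Longrightarrow> \<exists>g'. lvl v = Ctbl g' \<and> g' \<le> g"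
  using L_lev lev_less_Ctbl by (metis order_less_imp_le order_refl)

lemma top_below: "c \<in> X \<Longrightarrow> c \<in> X' \<Longrightarrow> (c,y) \<in> le' \<Longrightarrow> y \<notin> X \<Longrightarrow> blk_of y = Bk z' \<Longrightarrow>
   \<exists>g. lvl c = Ctbl g"
proof -
  assume h: "c \<in> X" "c \<in> X'" "(c,y) \<in> le'" "y \<notin> X" "blk_of y = Bk z'"
  have "c \<noteq> y" using h by blast
  hence ll: "lev_less (lvl c) (lvl y)" using q.lev2 h by blast
  show ?thesis
  proof (cases c)
    case (Lo a n) thus ?thesis by simp
  next
    case (Tp w) thus ?thesis using ll lev_less_W1s_from by simp
  next
    case (Md w n)
    hence "lvl y = W1s" using ll lev_less_W1_from by simp
    then obtain u where u: "y = Tp u" using lvl_W1s by blast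
    hence uz: "u = z'" using h by simp
    have yX': "y \<in> X'" using h q.leX by blast
    have "strict le' (Md w n) (Tp u)" using h Md u \<open>c \<noteq> y\<close> by (simp add: strict_def)
    hence "w = u"
    proof (rule contrapos_pp)
      assume "w \<noteq> u"
      thus "\<not> strict le' (Md w n) (Tp u)" using q.P4b[of w n u] h(2) Md yX' u by simp
    qed
    hence "Tp u \<in> X" using p.P3 h Md by simp
    thus ?thesis using u h by simp
  qed
qed

lemma top_le: "x \<in> X \<Longrightarrow> x \<notin> X' \<Longrightarrow> blk_of x = Bk z \<Longrightarrow> lvl x \<in> {W1, W1s} \<Longrightarrow> (x, Tp z) \<in> le"
proof -
  assume h: "x \<in> X" "x \<notin> X'" "blk_of x = Bk z" "lvl x \<in> {W1, W1s}"
  show ?thesis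
  proof (cases x)
    case (Lo a n) thus ?thesis using h by simp
  next
    case (Md w n)
    hence "w = z" using h by simp
    thus ?thesis using p.P4a h Md by (simp add: strict_def)
  next
    case (Tp w)
    thus ?thesis using h p.refl by simp
  qed
qed

lemma P4_one: "Md z n \<in> X \<Longrightarrow> \<xi> \<noteq> z \<Longrightarrow> (Md z n, Tp \<xi>) \<in> L \<Longrightarrow> False"
proof -
  assume h: "Md z n \<in> X" "\<xi> \<noteq> z" "(Md z n, Tp \<xi>) \<in> L"
  from D_bot[OF h(3) h(1)] show False
  proof (elim disjE exE conjE)
    assume a: "(Md z n, Tp \<xi>) \<in> le"
    hence "Tp \<xi> \<in> X" using p.leX by blast
    thus False using p.P4b[OF h(1) h(2)] a by (simp add: strict_def)
  next
    fix c assume c: "c \<in> X" "c \<in> X'" "(Md z n, c) \<in> le" "(c, Tp \<xi>) \<in> le'"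
    have TX: "Tp \<xi> \<in> X'" using c q.leX by blast
    show False
    proof (cases "c = Md z n")
      case True
      thus False using q.P4b[of z n \<xi>] c TX h(2) by (simp add: strict_def)
    next
      case False
      hence "lev_less W1 (lvl c)" using p.lev2 c by fastforce
      hence "lvl c = W1s" using lev_less_W1_from by blast
      then obtain w where w: "c = Tp w" using lvl_W1s by blast
      have "w = z"
      proof (rule ccontr)
        assume "w \<noteq> z"
        thus False using p.P4b[OF h(1), of w] c w False by (simp add: strict_def)
      qed
      hence "c \<noteq> Tp \<xi>" using w h(2) by simp
      hence "lev_less (lvl c) (lvl (Tp \<xi>))" using q.lev2 c by blast
      thus False using w by simp
    qed
  qed
qed

lemma P6_one: "t \<in> X \<Longrightarrow> lev_succ a (lvl t) \<Longrightarrow> (s,t) \<in> L \<Longrightarrow> s \<noteq> t \<Longrightarrow>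
   \<exists>v\<in>X \<union> X'. lvl v = a \<and> (s, v) \<in> L \<and> (v,t) \<in> L \<and> v \<noteq> t"
proof -
  assume h: "t \<in> X" "lev_succ a (lvl t)" "(s,t) \<in> L" "s \<noteq> t"
  from D_top[OF h(3) h(1)] show ?thesis
  proof (elim disjE exE conjE)
    assume "(s,t) \<in> le"
    then obtain v where "v \<in> X" "lvl v = a" "(s,v) \<in> le" "strict le v t"
      using p.P6[OF h(1) h(2)] h(4) by (auto simp: strict_def)
    thus ?thesis unfolding Lrel_def strict_def by blast
  next
    fix c assume c: "c \<in> X" "c \<in> X'" "(s,c) \<in> le'" "(c,t) \<in> le"
    show ?thesis
    proof (cases "c = t")
      case True
      then obtain v where "v \<in> X'" "lvl v = a" "(s,v) \<in> le'" "strict le' v t"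
        using q.P6[OF _ h(2), of s] c h(4) by (auto simp: strict_def)
      thus ?thesis unfolding Lrel_def strict_def by blast
    next
      case False
      then obtain v where v: "v \<in> X" "lvl v = a" "(c,v) \<in> le" "strict le v t"
        using p.P6[OF h(1) h(2), of c] c by (auto simp: strict_def)
      hence "(s,v) \<in> L" using c unfolding Lrel_def by blast
      thus ?thesis using v unfolding Lrel_def strict_def by blast
    qed
  qed
qed

end



context amalg begin

lemma le_L: "(x,y) \<in> le \<Longrightarrow> (x,y) \<in> L" unfolding Lrel_def by blast
lemma le'_L: "(x,y) \<in> le' \<Longrightarrow> (x,y) \<in> L" unfolding Lrel_def by blast

lemma I_X: "x \<in> X \<Longrightarrow> y \<in> X \<Longrightarrow> I {x,y} = i {x,y}"
  by (simp add: Iam_def)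

lemma I_mix: "x \<in> X \<Longrightarrow> x \<notin> X' \<Longrightarrow> y \<in> X' \<Longrightarrow> y \<notin> X \<Longrightarrow> I {x,y} = Mix (X \<union> X') L {x,y}"
proof -
  assume h: "x \<in> X" "x \<notin> X'" "y \<in> X'" "y \<notin> X"
  hence "x \<noteq> y" by blast
  hence "card {x,y} = 2" by simp
  thus ?thesis using h by (simp add: Iam_def)
qed

lemma Mix_inc: "(x,y) \<notin> L \<Longrightarrow> (y,x) \<notin> L \<Longrightarrow> Mix XX L {x,y} = {w\<in>XX. (w,x) \<in> L \<and> (w,y) \<in> L}"
proof -
  assume h: "(x,y) \<notin> L" "(y,x) \<notin> L"
  have nc: "\<not> (\<exists>a\<in>{x,y}. \<forall>b\<in>{x,y}. (a,b) \<in> L)" using h by blast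
  show ?thesis unfolding Mix_def if_not_P[OF nc] by simp
qed

lemma Mix_strict: "(x,y) \<in> L \<Longrightarrow> x \<noteq> y \<Longrightarrow> Mix XX L {x,y} = {x}"
proof -
  assume h: "(x,y) \<in> L" "x \<noteq> y"
  have yx: "(y,x) \<notin> L" using h L_antisym by blast
  have xx: "(x,x) \<in> L" using h L_sub L_refl by blast
  hence c: "\<exists>a\<in>{x,y}. \<forall>b\<in>{x,y}. (a,b) \<in> L" using h by blast
  have "{a\<in>{x,y}. \<forall>b\<in>{x,y}. (a,b) \<in> L} = {x}" using h xx yx by blast
  thus ?thesis unfolding Mix_def if_P[OF c] .
qed

lemma P7d_one: "x \<in> X \<Longrightarrow> y \<in> X \<Longrightarrow> (x,y) \<notin> L \<Longrightarrow> (y,x) \<notin> L \<Longrightarrow>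
  (\<forall>u\<in>X \<union> X'. ((u, x) \<in> L \<and> (u, y) \<in> L) \<longleftrightarrow> (\<exists>v\<in>I {x, y}. (u, v) \<in> L)) \<and>
  (\<forall>z z'. blk_of x = Bk z \<and> blk_of y = Bk z' \<and>
            lvl x \<in> {W1, W1s} \<and> lvl y \<in> {W1, W1s} \<and> z \<noteq> z' \<longrightarrow>
            (\<forall>v\<in>I {x, y}. \<exists>\<gamma>. lvl v = Ctbl \<gamma> \<and> \<gamma> < F {z, z'}))"
proof -
  assume h: "x \<in> X" "y \<in> X" "(x,y) \<notin> L" "(y,x) \<notin> L"
  have I: "I {x,y} = i {x,y}" using I_X h by blast
  have n: "(x,y) \<notin> le" "(y,x) \<notin> le" using h le_L by blast+
  show ?thesis
  proof (intro conjI)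
    show "\<forall>u\<in>X \<union> X'. ((u, x) \<in> L \<and> (u, y) \<in> L) \<longleftrightarrow> (\<exists>v\<in>I {x, y}. (u, v) \<in> L)"
    proof
      fix u assume uX: "u \<in> X \<union> X'"
      show "((u, x) \<in> L \<and> (u, y) \<in> L) \<longleftrightarrow> (\<exists>v\<in>I {x, y}. (u, v) \<in> L)"
      proof
        assume u: "(u,x) \<in> L \<and> (u,y) \<in> L"
        then obtain c where c: "c \<in> X" "(u,c) \<in> L" "(c,x) \<in> le" "(c,y) \<in> le" using K h by blast
        then obtain v where "v \<in> i {x,y}" "(c,v) \<in> le" using p.P7a[OF h(1) h(2) n c(1)] by blast
        thus "\<exists>v\<in>I {x, y}. (u, v) \<in> L" using I c(2) le_L L_trans by blast
      next
        assume "\<exists>v\<in>I {x, y}. (u, v) \<in> L"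
        then obtain v where v: "v \<in> i {x,y}" "(u,v) \<in> L" using I by blast
        hence "(v,x) \<in> le \<and> (v,y) \<in> le" using p.P7a_le[OF h(1) h(2) n] by blast
        thus "(u,x) \<in> L \<and> (u,y) \<in> L" using v le_L L_trans by blast
      qed
    qed
  next
    show "\<forall>z z'. blk_of x = Bk z \<and> blk_of y = Bk z' \<and>
            lvl x \<in> {W1, W1s} \<and> lvl y \<in> {W1, W1s} \<and> z \<noteq> z' \<longrightarrow>
            (\<forall>v\<in>I {x, y}. \<exists>\<gamma>. lvl v = Ctbl \<gamma> \<and> \<gamma> < F {z, z'})"
    proof (intro allI impI ballI)
      fix z z' v assume a: "blk_of x = Bk z \<and> blk_of y = Bk z' \<and> lvl x \<in> {W1, W1s} \<and> lvl y \<in> {W1, W1s} \<and> z \<noteq> z'"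
        and v: "v \<in> I {x,y}"
      show "\<exists>\<gamma>. lvl v = Ctbl \<gamma> \<and> \<gamma> < F {z, z'}"
        using p.P7b[OF h(1) h(2) n, of z z' v] a v I by simp
    qed
  qed
qed

lemma P7b_mix: "x \<in> X \<Longrightarrow> x \<notin> X' \<Longrightarrow> y \<in> X' \<Longrightarrow> y \<notin> X \<Longrightarrow> blk_of x = Bk z \<Longrightarrow> blk_of y = Bk z' \<Longrightarrow>
  lvl x \<in> {W1, W1s} \<Longrightarrow> lvl y \<in> {W1, W1s} \<Longrightarrow> z \<noteq> z' \<Longrightarrow> (v,x) \<in> L \<Longrightarrow> (v,y) \<in> L \<Longrightarrow>
  \<exists>g. lvl v = Ctbl g \<and> g < F {z, z'}"
proof -
  assume h: "x \<in> X" "x \<notin> X'" "y \<in> X'" "y \<notin> X" "blk_of x = Bk z" "blk_of y = Bk z'"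
    "lvl x \<in> {W1, W1s}" "lvl y \<in> {W1, W1s}" "z \<noteq> z'" and vx: "(v,x) \<in> L" and vy: "(v,y) \<in> L"
  interpret s: amalg F X' le' i' X le i \<delta> by (rule swap)
  have sL: "s.L = L" by (rule Lrel_sym)
  have xz: "(x, Tp z) \<in> le" using top_le h by blast
  have yz: "(y, Tp z') \<in> le'" using s.top_le h by blast
  have TzX: "Tp z \<in> X" and Tz'X: "Tp z' \<in> X'" using xz yz p.leX q.leX by blast+
  have vTz: "(v, Tp z) \<in> L" using vx xz le_L L_trans by blast
  have vTz': "(v, Tp z') \<in> L" using vy yz le'_L L_trans by blast
  have neq: "Tp z \<noteq> Tp z'" using h by simp
  have lvT: "\<not> lev_less (lvl (Tp a)) (lvl (Tp b))" for a b :: 'l by simp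
  show ?thesis
  proof (cases "Tp z' \<in> X")
    case True
    obtain c where c: "c \<in> X" "(v,c) \<in> L" "(c, Tp z) \<in> le" "(c, Tp z') \<in> le"
      using K[OF TzX True vTz vTz'] by blast
    have inc: "(Tp z, Tp z') \<notin> le" "(Tp z', Tp z) \<notin> le" using p.lev2 neq lvT by metis+
    obtain u where u: "u \<in> i {Tp z, Tp z'}" "(c,u) \<in> le" using p.P7a[OF TzX True inc c(1)] c by blast
    obtain g where g: "lvl u = Ctbl g" "g < F {z,z'}"
      using p.P7b[OF TzX True inc, of z z' u] u(1) h(9) by auto
    have "(v,u) \<in> L" using c(2) u(2) le_L L_trans by blast
    then obtain g' where "lvl v = Ctbl g'" "g' \<le> g" using lev_below g(1) by blast
    thus ?thesis using g(2) by auto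
  next
    case False
    show ?thesis
    proof (cases "Tp z \<in> X'")
      case True
      obtain c where c: "c \<in> X'" "(v,c) \<in> L" "(c, Tp z) \<in> le'" "(c, Tp z') \<in> le'"
        using s.K[OF True Tz'X] vTz vTz' sL by auto
      have inc: "(Tp z, Tp z') \<notin> le'" "(Tp z', Tp z) \<notin> le'" using q.lev2 neq lvT by metis+
      obtain u where u: "u \<in> i' {Tp z, Tp z'}" "(c,u) \<in> le'" using q.P7a[OF True Tz'X inc c(1)] c by blast
      obtain g where g: "lvl u = Ctbl g" "g < F {z,z'}"
        using q.P7b[OF True Tz'X inc, of z z' u] u(1) h(9) by auto
      have "(v,u) \<in> L" using c(2) u(2) le'_L L_trans by blast
      then obtain g' where "lvl v = Ctbl g'" "g' \<le> g" using lev_below g(1) by blast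
      thus ?thesis using g(2) by auto
    next
      case False2: False
      have dF: "\<delta> < F {z,z'}" using A5[OF TzX False2 Tz'X False] .
      have vXX: "v \<in> X \<union> X'" using vx L_sub by blast
      obtain c where c: "c \<in> X" "c \<in> X'" "(v,c) \<in> L"
        and cC: "\<exists>g. lvl c = Ctbl g"
      proof (cases "v \<in> X")
        case True
        from D_bot[OF vy True] obtain c where c: "c \<in> X" "c \<in> X'" "(v,c) \<in> le" "(c,y) \<in> le'"
          using h(4) p.leX by blast
        have "\<exists>g. lvl c = Ctbl g" using top_below[OF c(1) c(2) c(4) h(4) h(6)] .
        thus ?thesis using that c le_L by blast
      next
        case False
        hence vX': "v \<in> X'" using vXX by blast
        have vx': "(v,x) \<in> s.L" using vx sL by simp
        from s.D_bot[OF vx' vX'] obtain c where c: "c \<in> X'" "c \<in> X" "(v,c) \<in> le'" "(c,x) \<in> le"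
          using h(2) q.leX by blast
        have "\<exists>g. lvl c = Ctbl g" using s.top_below[OF c(1) c(2) c(4) h(2) h(5)] .
        thus ?thesis using that c le'_L by blast
      qed
      from cC obtain g where g: "lvl c = Ctbl g" by blast
      have "g \<le> \<delta>" using A4 c g by blast
      obtain g' where "lvl v = Ctbl g'" "g' \<le> g" using lev_below c(3) g by blast
      thus ?thesis using \<open>g \<le> \<delta>\<close> dF by (meson order_le_less_trans)
    qed
  qed
qed

end



lemma Mix_sub: "Mix XX L e \<subseteq> e \<union> XX"
  unfolding Mix_def by auto

context amalg begin

lemma P7d_mix: "x \<in> X \<Longrightarrow> x \<notin> X' \<Longrightarrow> y \<in> X' \<Longrightarrow> y \<notin> X \<Longrightarrow> (x,y) \<notin> L \<Longrightarrow> (y,x) \<notin> L \<Longrightarrow>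
  (\<forall>u\<in>X \<union> X'. ((u, x) \<in> L \<and> (u, y) \<in> L) \<longleftrightarrow> (\<exists>v\<in>I {x, y}. (u, v) \<in> L)) \<and>
  (\<forall>z z'. blk_of x = Bk z \<and> blk_of y = Bk z' \<and>
            lvl x \<in> {W1, W1s} \<and> lvl y \<in> {W1, W1s} \<and> z \<noteq> z' \<longrightarrow>
            (\<forall>v\<in>I {x, y}. \<exists>\<gamma>. lvl v = Ctbl \<gamma> \<and> \<gamma> < F {z, z'}))"
proof -
  assume h: "x \<in> X" "x \<notin> X'" "y \<in> X'" "y \<notin> X" "(x,y) \<notin> L" "(y,x) \<notin> L"
  have I: "I {x,y} = {w\<in>X \<union> X'. (w,x) \<in> L \<and> (w,y) \<in> L}"
    using I_mix[OF h(1-4)] Mix_inc[OF h(5,6)] by simp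
  show ?thesis
  proof (intro conjI)
    show "\<forall>u\<in>X \<union> X'. ((u, x) \<in> L \<and> (u, y) \<in> L) \<longleftrightarrow> (\<exists>v\<in>I {x, y}. (u, v) \<in> L)"
    proof
      fix u assume uX: "u \<in> X \<union> X'"
      show "((u, x) \<in> L \<and> (u, y) \<in> L) \<longleftrightarrow> (\<exists>v\<in>I {x, y}. (u, v) \<in> L)"
      proof
        assume "(u, x) \<in> L \<and> (u, y) \<in> L"
        thus "\<exists>v\<in>I {x, y}. (u, v) \<in> L" using I uX L_refl by blast
      next
        assume "\<exists>v\<in>I {x, y}. (u, v) \<in> L"
        then obtain v where "(v,x) \<in> L" "(v,y) \<in> L" "(u,v) \<in> L" using I by blast
        thus "(u, x) \<in> L \<and> (u, y) \<in> L" using L_trans by blast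
      qed
    qed
  next
    show "\<forall>z z'. blk_of x = Bk z \<and> blk_of y = Bk z' \<and>
            lvl x \<in> {W1, W1s} \<and> lvl y \<in> {W1, W1s} \<and> z \<noteq> z' \<longrightarrow>
            (\<forall>v\<in>I {x, y}. \<exists>\<gamma>. lvl v = Ctbl \<gamma> \<and> \<gamma> < F {z, z'})"
    proof (intro allI impI ballI)
      fix z z' v assume a: "blk_of x = Bk z \<and> blk_of y = Bk z' \<and> lvl x \<in> {W1, W1s} \<and> lvl y \<in> {W1, W1s} \<and> z \<noteq> z'"
        and v: "v \<in> I {x,y}"
      have "(v,x) \<in> L" "(v,y) \<in> L" using v I by blast+
      thus "\<exists>\<gamma>. lvl v = Ctbl \<gamma> \<and> \<gamma> < F {z, z'}"
        using P7b_mix[OF h(1-4), of z z' v] a by blast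
    qed
  qed
qed

lemma amalgam_Pcond: "Pcond F (X \<union> X', L, I)"
proof -
  interpret s: amalg F X' le' i' X le i \<delta> by (rule swap)
  have sL: "s.L = L" by (rule Lrel_sym)
  have sI: "s.I = I" by (rule I_swap)
  have sX: "X' \<union> X = X \<union> X'" by (rule Un_commute)
  note sw = sL sI sX
  have c1: "finite (X \<union> X')" using p.fin q.fin by simp
  have c2: "L \<subseteq> (X \<union> X') \<times> (X \<union> X')" by (rule L_sub)
  have c3: "partial_order_on (X \<union> X') L"
    unfolding partial_order_on_def preorder_on_def refl_on_def trans_def antisym_def
    using L_sub L_refl L_trans L_antisym by blast
  have c4: "\<forall>x y. strict L x y \<longrightarrow> lev_less (lvl x) (lvl y)"
    using L_lev by (auto simp: strict_def)
  have c5: "\<forall>z. (\<exists>x\<in>X \<union> X'. blk_of x = Bk z) \<longrightarrow> Tp z \<in> X \<union> X'"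
    using p.P3 q.P3 by blast
  have c6: "\<forall>z n. Md z n \<in> X \<union> X' \<longrightarrow> strict L (Md z n) (Tp z) \<and>
          (\<forall>\<xi>. \<xi> \<noteq> z \<and> Tp \<xi> \<in> X \<union> X' \<longrightarrow> \<not> strict L (Md z n) (Tp \<xi>))"
  proof (intro allI impI conjI)
    fix z n \<xi> assume m: "Md z n \<in> X \<union> X'"
    show "strict L (Md z n) (Tp z)"
      using m p.P4a q.P4a le_L le'_L by (auto simp: strict_def)
    assume "\<xi> \<noteq> z \<and> Tp \<xi> \<in> X \<union> X'"
    thus "\<not> strict L (Md z n) (Tp \<xi>)"
      using m P4_one s.P4_one sw by (auto simp: strict_def)
  qed
  have c7: "\<forall>s\<in>X \<union> X'. \<forall>t\<in>X \<union> X'. s \<noteq> t \<and> blk_of s = blk_of t \<and> lvl s = lvl t \<longrightarrow> I {s, t} = {}"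
  proof (intro ballI impI)
    fix x y assume xy: "x \<in> X \<union> X'" "y \<in> X \<union> X'" and c: "x \<noteq> y \<and> blk_of x = blk_of y \<and> lvl x = lvl y"
    show "I {x,y} = {}"
    proof (cases "x \<in> X \<and> y \<in> X")
      case True thus ?thesis using I_X p.P5 c by simp
    next
      case False
      show ?thesis
      proof (cases "x \<in> X' \<and> y \<in> X'")
        case True thus ?thesis using s.I_X q.P5 c sw by metis
      next
        case False2: False
        show ?thesis
        proof (cases "x \<in> X")
          case True
          hence "y \<in> X'" using False xy by blast
          thus ?thesis using A3[OF True] c False2 True by blast
        next
          case False3: False
          hence "x \<in> X'" "y \<in> X" using False2 xy by blast+
          thus ?thesis using A3[of y x] c False3 by metis
        qed
      qed
    qed
  qed
  have c8: "\<forall>t\<in>X \<union> X'. \<forall>a s. lev_succ a (lvl t) \<and> strict L s t \<longrightarrow>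
          (\<exists>v\<in>X \<union> X'. lvl v = a \<and> (s, v) \<in> L \<and> strict L v t)"
  proof (intro ballI allI impI)
    fix t a s assume t: "t \<in> X \<union> X'" and c: "lev_succ a (lvl t) \<and> strict L s t"
    show "\<exists>v\<in>X \<union> X'. lvl v = a \<and> (s, v) \<in> L \<and> strict L v t"
    proof (cases "t \<in> X")
      case True thus ?thesis using P6_one[OF True] c by (auto simp: strict_def)
    next
      case False
      hence "t \<in> X'" using t by blast
      thus ?thesis using s.P6_one[of t a s] c sw by (auto simp: strict_def)
    qed
  qed
  have c9: "\<forall>e. (\<exists>x\<in>X \<union> X'. \<exists>y\<in>X \<union> X'. x \<noteq> y \<and> e = {x, y}) \<longrightarrow> I e \<subseteq> X \<union> X' \<and> finite (I e)"
  proof (intro allI impI)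
    fix e assume "\<exists>x\<in>X \<union> X'. \<exists>y\<in>X \<union> X'. x \<noteq> y \<and> e = {x, y}"
    then obtain x y where xy: "x \<in> X \<union> X'" "y \<in> X \<union> X'" "x \<noteq> y" "e = {x,y}" by blast
    have "I e \<subseteq> X \<union> X'"
    proof (cases "e \<subseteq> X")
      case True thus ?thesis using p.P7dom xy by (simp add: Iam_def) blast
    next
      case False
      show ?thesis
      proof (cases "e \<subseteq> X'")
        case True thus ?thesis using q.P7dom xy False by (simp add: Iam_def) blast
      next
        case False2: False
        have "e \<subseteq> X \<union> X'" using xy by blast
        thus ?thesis using False False2 Mix_sub[of "X \<union> X'" L e] by (auto simp: Iam_def)
      qed
    qed
    thus "I e \<subseteq> X \<union> X' \<and> finite (I e)" using c1 finite_subset by blast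
  qed
  have c10: "\<forall>e. \<not> (\<exists>x\<in>X \<union> X'. \<exists>y\<in>X \<union> X'. x \<noteq> y \<and> e = {x, y}) \<longrightarrow> I e = {}"
  proof (intro allI impI)
    fix e assume ne: "\<not> (\<exists>x\<in>X \<union> X'. \<exists>y\<in>X \<union> X'. x \<noteq> y \<and> e = {x, y})"
    have n1: "\<not> (\<exists>x\<in>X. \<exists>y\<in>X. x \<noteq> y \<and> e = {x, y})" using ne by blast
    have n2: "\<not> (\<exists>x\<in>X'. \<exists>y\<in>X'. x \<noteq> y \<and> e = {x, y})" using ne by blast
    show "I e = {}"
    proof (cases "e \<subseteq> X")
      case True thus ?thesis using p.P7out[OF n1] by (simp add: Iam_def)
    next
      case False
      show ?thesis
      proof (cases "e \<subseteq> X'")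
        case True thus ?thesis using q.P7out[OF n2] False by (simp add: Iam_def)
      next
        case False2: False
        have "\<not> (e \<subseteq> X \<union> X' \<and> card e = 2)"
        proof
          assume a: "e \<subseteq> X \<union> X' \<and> card e = 2"
          then obtain x y where "x \<noteq> y" "e = {x,y}" using card2 by blast
          thus False using ne a by blast
        qed
        thus ?thesis using False False2 unfolding Iam_def by auto
      qed
    qed
  qed
  have c11: "\<forall>x y. strict L x y \<longrightarrow> I {x, y} = {x}"
  proof (intro allI impI)
    fix x y assume st: "strict L x y"
    hence xy: "(x,y) \<in> L" "x \<noteq> y" by (auto simp: strict_def)
    hence xyX: "x \<in> X \<union> X'" "y \<in> X \<union> X'" using L_sub by blast+
    show "I {x,y} = {x}"
    proof (cases "x \<in> X \<and> y \<in> X")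
      case True
      hence "strict le x y" using xy L_restr by (simp add: strict_def)
      thus ?thesis using I_X p.P7s True by simp
    next
      case False
      show ?thesis
      proof (cases "x \<in> X' \<and> y \<in> X'")
        case True
        hence "(x,y) \<in> s.L" using xy sL by simp
        hence "strict le' x y" using xy s.L_restr True by (simp add: strict_def)
        thus ?thesis using s.I_X q.P7s True sI by metis
      next
        case False2: False
        show ?thesis
        proof (cases "x \<in> X")
          case True
          hence "x \<notin> X'" "y \<in> X'" "y \<notin> X" using False False2 xyX by blast+
          thus ?thesis using I_mix True Mix_strict xy by simp
        next
          case False3: False
          hence "x \<in> X'" "y \<in> X" "y \<notin> X'" using False2 xyX by blast+
          hence "s.I {x,y} = Mix (X' \<union> X) s.L {x,y}" using s.I_mix False3 by blast
          thus ?thesis using Mix_strict xy sw by simp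
        qed
      qed
    qed
  qed
  have c12: "\<forall>x\<in>X \<union> X'. \<forall>y\<in>X \<union> X'. (x, y) \<notin> L \<and> (y, x) \<notin> L \<longrightarrow>
        (\<forall>u\<in>X \<union> X'. ((u, x) \<in> L \<and> (u, y) \<in> L) \<longleftrightarrow> (\<exists>v\<in>I {x, y}. (u, v) \<in> L)) \<and>
        (\<forall>z z'. blk_of x = Bk z \<and> blk_of y = Bk z' \<and>
            lvl x \<in> {W1, W1s} \<and> lvl y \<in> {W1, W1s} \<and> z \<noteq> z' \<longrightarrow>
            (\<forall>v\<in>I {x, y}. \<exists>\<gamma>. lvl v = Ctbl \<gamma> \<and> \<gamma> < F {z, z'}))"
  proof (intro ballI impI)
    fix x y assume xyX: "x \<in> X \<union> X'" "y \<in> X \<union> X'" and inc: "(x, y) \<notin> L \<and> (y, x) \<notin> L"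
    show "(\<forall>u\<in>X \<union> X'. ((u, x) \<in> L \<and> (u, y) \<in> L) \<longleftrightarrow> (\<exists>v\<in>I {x, y}. (u, v) \<in> L)) \<and>
        (\<forall>z z'. blk_of x = Bk z \<and> blk_of y = Bk z' \<and>
            lvl x \<in> {W1, W1s} \<and> lvl y \<in> {W1, W1s} \<and> z \<noteq> z' \<longrightarrow>
            (\<forall>v\<in>I {x, y}. \<exists>\<gamma>. lvl v = Ctbl \<gamma> \<and> \<gamma> < F {z, z'}))"
    proof (cases "x \<in> X \<and> y \<in> X")
      case True thus ?thesis using P7d_one inc by blast
    next
      case False
      show ?thesis
      proof (cases "x \<in> X' \<and> y \<in> X'")
        case True
        have "(x,y) \<notin> s.L" "(y,x) \<notin> s.L" using inc sL by simp_all
        from s.P7d_one[OF _ _ this] True show ?thesis unfolding sw by blast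
      next
        case False2: False
        show ?thesis
        proof (cases "x \<in> X")
          case True
          hence "x \<notin> X'" "y \<in> X'" "y \<notin> X" using False False2 xyX by blast+
          thus ?thesis using P7d_mix True inc by blast
        next
          case False3: False
          hence h: "x \<in> X'" "y \<in> X" "y \<notin> X'" using False2 xyX by blast+
          have "(x,y) \<notin> s.L" "(y,x) \<notin> s.L" using inc sL by simp_all
          from s.P7d_mix[OF h(1) False3 h(2) h(3) this] show ?thesis unfolding sw .
        qed
      qed
    qed
  qed
  show ?thesis unfolding Pcond_def prod.case
    using c1 c2 c3 c4 c5 c6 c7 c8 c9 c10 c11 c12 by (intro conjI)
qed

lemma amalgam_compatible: "compatible F (X, le, i) (X', le', i')"
proof -
  interpret s: amalg F X' le' i' X le i \<delta> by (rule swap)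
  have sL: "s.L = L" by (rule Lrel_sym)
  have sI: "s.I = I" by (rule I_swap)
  have r: "(X \<union> X', L, I) \<in> Pset F" using amalgam_Pcond by (simp add: Pset_def)
  have l1: "Pleq (X \<union> X', L, I) (X, le, i)"
    unfolding Pleq_def prod.case
  proof (intro conjI ballI impI)
    show "X \<subseteq> X \<union> X'" by blast
    show "le = L \<inter> X \<times> X" using L_restr p.le_sub by blast
    fix x y assume "x \<in> X" "y \<in> X" "x \<noteq> y"
    thus "I {x,y} = i {x,y}" using I_X by blast
  qed
  have l2: "Pleq (X \<union> X', L, I) (X', le', i')"
    unfolding Pleq_def prod.case
  proof (intro conjI ballI impI)
    show "X' \<subseteq> X \<union> X'" by blast
    show "le' = L \<inter> X' \<times> X'" using s.L_restr q.le_sub sL by blast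
    fix x y assume "x \<in> X'" "y \<in> X'" "x \<noteq> y"
    thus "I {x,y} = i' {x,y}" using s.I_X sI by metis
  qed
  show ?thesis unfolding compatible_def using r l1 l2 by blast
qed

end



definition key :: "('c,'l) node \<Rightarrow> 'l blk \<times> 'c lev" where "key x = (blk_of x, lvl x)"

lemma fiber_countable: "countable {x::('c,'l) node. key x = k}"
proof (rule countableI)
  show "inj_on (\<lambda>x. case x of Lo a n \<Rightarrow> 2*n | Md z n \<Rightarrow> 2*n+1 | Tp z \<Rightarrow> (0::nat)) {x. key x = k}"
  proof (rule inj_onI)
    fix x y :: "('c,'l) node" assume "x \<in> {x. key x = k}" "y \<in> {x. key x = k}"
      and c: "(case x of Lo a n \<Rightarrow> 2*n | Md z n \<Rightarrow> 2*n+1 | Tp z \<Rightarrow> (0::nat)) =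
              (case y of Lo a n \<Rightarrow> 2*n | Md z n \<Rightarrow> 2*n+1 | Tp z \<Rightarrow> (0::nat))"
    hence k: "key x = key y" by simp
    show "x = y"
      using k c by (cases x; cases y) (auto simp: key_def)
  qed
qed

context cnd begin

lemma i_bound: "x \<in> X \<Longrightarrow> y \<in> X \<Longrightarrow> x \<noteq> y \<Longrightarrow> v \<in> i {x,y} \<Longrightarrow>
  v = x \<or> v = y \<or> (\<exists>g. lvl v = Ctbl g \<and> ((\<exists>a. lvl x = Ctbl a \<and> g < a) \<or> (\<exists>a. lvl y = Ctbl a \<and> g < a) \<or>
     (\<exists>z z'. blk_of x = Bk z \<and> blk_of y = Bk z' \<and> g < F {z, z'})))"
proof -
  assume h: "x \<in> X" "y \<in> X" "x \<noteq> y" "v \<in> i {x,y}"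
  show ?thesis
  proof (cases "(x,y) \<in> le")
    case True
    hence "i {x,y} = {x}" using P7s h(3) by (simp add: strict_def)
    thus ?thesis using h(4) by simp
  next
    case nxy: False
    show ?thesis
    proof (cases "(y,x) \<in> le")
      case True
      hence "i {y,x} = {y}" using P7s h(3) by (simp add: strict_def)
      thus ?thesis using h(4) by (simp add: insert_commute)
    next
      case nyx: False
      have vb: "(v,x) \<in> le" "(v,y) \<in> le" using P7a_le[OF h(1) h(2) nxy nyx h(4)] by blast+
      have vx: "v \<noteq> x" using vb nxy by blast
      have vy: "v \<noteq> y" using vb nyx by blast
      have lx: "lev_less (lvl v) (lvl x)" using lev2 vb vx by blast
      have ly: "lev_less (lvl v) (lvl y)" using lev2 vb vy by blast
      show ?thesis
      proof (cases "\<exists>a. lvl x = Ctbl a")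
        case True
        then obtain a where a: "lvl x = Ctbl a" by blast
        then obtain g where "lvl v = Ctbl g" "g < a" using lev_less_Ctbl lx by fastforce
        thus ?thesis using a by blast
      next
        case nx: False
        show ?thesis
        proof (cases "\<exists>a. lvl y = Ctbl a")
          case True
          then obtain a where a: "lvl y = Ctbl a" by blast
          then obtain g where "lvl v = Ctbl g" "g < a" using lev_less_Ctbl ly by fastforce
          thus ?thesis using a by blast
        next
          case ny: False
          have tx: "lvl x \<in> {W1, W1s}" using nx by (cases "lvl x") auto
          have ty: "lvl y \<in> {W1, W1s}" using ny by (cases "lvl y") auto
          obtain z where z: "blk_of x = Bk z" using tx by (cases x) auto
          obtain z' where z': "blk_of y = Bk z'" using ty by (cases y) auto
          show ?thesis
          proof (cases "z = z'")
            case False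
            thus ?thesis using P7b[OF h(1) h(2) nxy nyx z z' tx ty False h(4)] z z' by blast
          next
            case True
            show ?thesis
            proof (cases "lvl x = lvl y")
              case True
              hence "i {x,y} = {}" using P5 h z z' \<open>z = z'\<close> by simp
              thus ?thesis using h(4) by simp
            next
              case False
              have "(x,y) \<in> le \<or> (y,x) \<in> le"
              proof (cases x)
                case (Lo a n) thus ?thesis using tx by simp
              next
                case (Md w n)
                hence "y = Tp z" using False ty z z' \<open>z = z'\<close> by (cases y) auto
                thus ?thesis using P4a h(1) Md z by (simp add: strict_def)
              next
                case (Tp w)
                then obtain n where "y = Md z n" using False ty z z' \<open>z = z'\<close> by (cases y) auto
                thus ?thesis using P4a h(2) Tp z by (simp add: strict_def)
              qed
              thus ?thesis using nxy nyx by blast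
            qed
          qed
        qed
      qed
    qed
  qed
qed

end



lemma unc_ne: "uncountable S \<Longrightarrow> \<exists>p. p \<in> S"
proof (rule ccontr)
  assume "uncountable S" "\<not> (\<exists>p. p \<in> S)"
  hence "S = {}" by blast
  thus False using \<open>uncountable S\<close> by simp
qed

lemma unc_other: "uncountable S \<Longrightarrow> \<exists>q. q \<in> S \<and> q \<noteq> p"
proof (rule ccontr)
  assume u: "uncountable S" and "\<not> (\<exists>q. q \<in> S \<and> q \<noteq> p)"
  hence "S \<subseteq> {p}" by blast
  hence "countable S" by (rule countable_subset) simp
  thus False using u by simp
qed

lemma unc_two: "uncountable S \<Longrightarrow> \<exists>p q. p \<in> S \<and> q \<in> S \<and> p \<noteq> q"
proof -
  assume u: "uncountable S"
  obtain p where p: "p \<in> S" using unc_ne[OF u] by (elim exE)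
  obtain q where q: "q \<in> S \<and> q \<noteq> p" using unc_other[OF u, of p] by (elim exE)
  show ?thesis using p q by blast
qed

lemma unc_mono: "uncountable S \<Longrightarrow> S \<subseteq> T \<Longrightarrow> uncountable T"
  using countable_subset by blast

theorem lemma3p9:
  fixes F :: "'l set \<Rightarrow> 'c::wellorder"
  assumes "is_omega1_type TYPE('c)"
    and "ordLeq3 (cardSuc (cardSuc (cardSuc natLeq))) (card_of (UNIV :: 'l set))"
    and "strongly_unbounded F"
  shows "ccc F"
  unfolding ccc_def
proof (intro allI impI)
  note om = assms(1) and SU = assms(3)
  fix A :: "('c,'l) cond set"
  assume AP: "A \<subseteq> Pset F" and anti: "\<forall>p\<in>A. \<forall>q\<in>A. p \<noteq> q \<longrightarrow> \<not> compatible F p q"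
  show "countable A"
  proof (rule ccontr)
    assume unc: "\<not> countable A"
    define Xp :: "('c,'l) cond \<Rightarrow> ('c,'l) node set" where "Xp p = fst p" for p
    define Lp :: "('c,'l) cond \<Rightarrow> ('c,'l) node rel" where "Lp p = fst (snd p)" for p
    define Ip :: "('c,'l) cond \<Rightarrow> ('c,'l) node set \<Rightarrow> ('c,'l) node set" where "Ip p = snd (snd p)" for p
    have pe: "(Xp p, Lp p, Ip p) = p" for p by (simp add: Xp_def Lp_def Ip_def)
    have cndp: "cnd F (Xp p) (Lp p) (Ip p)" if "p \<in> A" for p
    proof
      have "Pcond F p" using that AP by (auto simp: Pset_def)
      thus "Pcond F (Xp p, Lp p, Ip p)" by (simp add: pe)
    qed
    have finK: "\<forall>p\<in>A. finite (key ` Xp p)" using cndp cnd.fin by blast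
    obtain A1 where A10: "A1 \<subseteq> A \<and> uncountable A1 \<and> (\<exists>K. \<forall>p\<in>A1. \<forall>q\<in>A1. p \<noteq> q \<longrightarrow> key ` Xp p \<inter> key ` Xp q = K)"
      using delta_system[OF unc finK] by (rule exE)
    have A1A: "A1 \<subseteq> A" using A10 by simp
    have uA1: "uncountable A1" using A10 by simp
    obtain K0 where K0: "\<forall>p\<in>A1. \<forall>q\<in>A1. p \<noteq> q \<longrightarrow> key ` Xp p \<inter> key ` Xp q = K0"
      using A10 by (elim conjE exE)
    obtain p0 q0 where pq0: "p0 \<in> A1" "q0 \<in> A1" "p0 \<noteq> q0" using unc_two[OF uA1] by (elim exE conjE)
    have finK0: "finite K0" using K0 pq0 finK A1A by (metis finite_Int subsetD)
    define N0 where "N0 = {x::('c,'l) node. key x \<in> K0}"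
    have N0eq: "N0 = (\<Union>k\<in>K0. {x. key x = k})" unfolding N0_def by blast
    have cN0: "countable N0" unfolding N0eq
    proof (rule countable_UN)
      show "countable K0" using finK0 by (rule countable_finite)
      show "\<And>k. k \<in> K0 \<Longrightarrow> countable {x. key x = k}" by (rule fiber_countable)
    qed
    define R where "R p = {x\<in>Xp p. key x \<in> K0}" for p
    have Rin: "R p \<in> {S. finite S \<and> S \<subseteq> N0}" if "p \<in> A1" for p
    proof -
      have "finite (Xp p)" using that A1A cndp cnd.fin by blast
      hence "finite (R p)" unfolding R_def by simp
      moreover have "R p \<subseteq> N0" unfolding R_def N0_def by blast
      ultimately show ?thesis by blast
    qed
    have cR: "countable {S. finite S \<and> S \<subseteq> N0}" using countable_Collect_finite_subset[OF cN0] .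
    have "\<exists>c. uncountable {p\<in>A1. R p = c}" by (rule uncountable_fiber2[OF uA1 cR]) (rule Rin)
    then obtain R0 where uA2: "uncountable {p\<in>A1. R p = R0}" by (elim exE)
    define A2 where "A2 = {p\<in>A1. R p = R0}"
    have uA2': "uncountable A2" using uA2 unfolding A2_def .
    have A2A: "A2 \<subseteq> A" using A1A unfolding A2_def by blast
    have RA2: "p \<in> A2 \<Longrightarrow> R p = R0" for p unfolding A2_def by blast
    have R0X: "p \<in> A2 \<Longrightarrow> R0 \<subseteq> Xp p" for p using RA2 unfolding R_def by blast
    have XI: "p \<in> A2 \<Longrightarrow> q \<in> A2 \<Longrightarrow> p \<noteq> q \<Longrightarrow> x \<in> Xp p \<Longrightarrow> x \<in> Xp q \<Longrightarrow> x \<in> R0" for p q x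
    proof -
      assume h: "p \<in> A2" "q \<in> A2" "p \<noteq> q" "x \<in> Xp p" "x \<in> Xp q"
      have "p \<in> A1" "q \<in> A1" using h unfolding A2_def by blast+
      hence "key x \<in> K0" using K0 h by blast
      thus "x \<in> R0" using RA2[OF h(1)] h(4) unfolding R_def by blast
    qed
    obtain pA2 where pA2: "pA2 \<in> A2" using unc_ne[OF uA2'] by (elim exE)
    have finR0: "finite R0" using R0X[OF pA2] cndp[of pA2] A2A pA2 cnd.fin finite_subset by blast
    define Z0 where "Z0 = Bk -` (blk_of ` R0)"
    define T0 where "T0 = (Ctbl -` (lvl ` R0)) \<union> (\<lambda>zz. F {fst zz, snd zz}) ` (Z0 \<times> Z0)"
    have finZ0: "finite Z0" unfolding Z0_def using finR0 by (intro finite_vimageI) (auto simp: inj_def)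
    have finT0: "finite T0" unfolding T0_def using finR0 finZ0
      by (intro finite_UnI finite_vimageI finite_imageI) (auto simp: inj_def)
    define B where "B = Max (insert undefined T0)"
    have B: "t \<in> T0 \<Longrightarrow> t \<le> B" for t unfolding B_def using finT0 by simp
    define S where "S = R0 \<union> {v::('c,'l) node. \<exists>g. lvl v = Ctbl g \<and> g \<le> B}"
    have cS: "countable S"
    proof -
      have "{g. g \<le> B} = insert B {g. g < B}" by auto
      hence cB: "countable {g. g \<le> B}" using om by (simp add: is_omega1_type_def)
      have "{v::('c,'l) node. \<exists>g. lvl v = Ctbl g \<and> g \<le> B} \<subseteq> (\<lambda>gn. Lo (fst gn) (snd gn)) ` ({g. g \<le> B} \<times> UNIV)"
      proof
        fix v :: "('c,'l) node" assume "v \<in> {v. \<exists>g. lvl v = Ctbl g \<and> g \<le> B}"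
        then obtain g where g: "lvl v = Ctbl g" "g \<le> B" by blast
        then obtain n where "v = Lo g n" by (cases v) auto
        thus "v \<in> (\<lambda>gn. Lo (fst gn) (snd gn)) ` ({g. g \<le> B} \<times> UNIV)" using g by force
      qed
      moreover have "countable ({g. g \<le> B} \<times> (UNIV::nat set))"
        by (rule countable_SIGMA[OF cB]) simp
      hence "countable ((\<lambda>gn. Lo (fst gn) (snd gn)) ` ({g. g \<le> B} \<times> (UNIV::nat set)))"
        by (rule countable_image)
      ultimately have "countable {v::('c,'l) node. \<exists>g. lvl v = Ctbl g \<and> g \<le> B}"
        by (rule countable_subset)
      moreover have "countable R0" using finR0 by (rule countable_finite)
      ultimately show ?thesis unfolding S_def by simp
    qed
    define G where "G p = {(e,v). e \<subseteq> R0 \<and> card e = 2 \<and> v \<in> Ip p e}" for p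
    have GS: "G p \<subseteq> Pow R0 \<times> S" if "p \<in> A2" for p
    proof
      fix ev assume "ev \<in> G p"
      then obtain e v where ev: "ev = (e,v)" "e \<subseteq> R0" "card e = 2" "v \<in> Ip p e" unfolding G_def by blast
      then obtain x y where xy: "x \<noteq> y" "e = {x,y}" using card2 by blast
      have xyR: "x \<in> R0" "y \<in> R0" using xy ev by blast+
      interpret c: cnd F "Xp p" "Lp p" "Ip p" using cndp A2A that by blast
      have xyX: "x \<in> Xp p" "y \<in> Xp p" using xyR R0X that by blast+
      have "v \<in> S"
      proof -
        from c.i_bound[OF xyX xy(1), of v] ev(4) xy(2)
        consider "v = x" | "v = y" | g where "lvl v = Ctbl g" "(\<exists>a. lvl x = Ctbl a \<and> g < a) \<or> (\<exists>a. lvl y = Ctbl a \<and> g < a) \<or>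
             (\<exists>z z'. blk_of x = Bk z \<and> blk_of y = Bk z' \<and> g < F {z, z'})" by blast
        thus ?thesis
        proof cases
          case 1 thus ?thesis using xyR unfolding S_def by blast
        next
          case 2 thus ?thesis using xyR unfolding S_def by blast
        next
          case (3 g)
          have "g < B \<or> g \<le> B"
          proof -
            from 3(2) show ?thesis
            proof (elim disjE exE conjE)
              fix a assume "lvl x = Ctbl a" "g < a"
              hence "a \<in> T0" using xyR unfolding T0_def by force
              thus ?thesis using B \<open>g < a\<close> by fastforce
            next
              fix a assume "lvl y = Ctbl a" "g < a"
              hence "a \<in> T0" using xyR unfolding T0_def by force
              thus ?thesis using B \<open>g < a\<close> by fastforce
            next
              fix z z' assume zz: "blk_of x = Bk z" "blk_of y = Bk z'" "g < F {z, z'}"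
              have "z \<in> Z0" "z' \<in> Z0" using zz xyR unfolding Z0_def by force+
              hence "F {z,z'} \<in> T0" unfolding T0_def by force
              thus ?thesis using B zz(3) by fastforce
            qed
          qed
          hence "g \<le> B" by auto
          thus ?thesis using 3(1) unfolding S_def by blast
        qed
      qed
      thus "ev \<in> Pow R0 \<times> S" using ev by blast
    qed
    have Gfin: "finite (G p)" if "p \<in> A2" for p
    proof -
      interpret c: cnd F "Xp p" "Lp p" "Ip p" using cndp A2A that by blast
      have "G p \<subseteq> Pow R0 \<times> Xp p"
      proof
        fix ev assume "ev \<in> G p"
        then obtain e v where ev: "ev = (e,v)" "e \<subseteq> R0" "card e = 2" "v \<in> Ip p e" unfolding G_def by blast
        then obtain x y where xy: "x \<noteq> y" "e = {x,y}" using card2 by blast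
        have xyX: "x \<in> Xp p" "y \<in> Xp p" using xy ev R0X that by blast+
        thus "ev \<in> Pow R0 \<times> Xp p" using c.P7dom[OF xyX xy(1)] ev xy by blast
      qed
      thus ?thesis using finR0 c.fin by (meson finite_Pow_iff finite_SigmaI finite_subset)
    qed
    define hh where "hh p = (Lp p \<inter> R0 \<times> R0, G p)" for p
    have chh: "countable (Pow (R0 \<times> R0) \<times> {H. finite H \<and> H \<subseteq> Pow R0 \<times> S})"
    proof -
      have "countable (Pow R0 \<times> S)" using finR0 cS by (simp add: countable_finite)
      hence "countable {H. finite H \<and> H \<subseteq> Pow R0 \<times> S}" by (rule countable_Collect_finite_subset)
      moreover have "countable (Pow (R0 \<times> R0))" using finR0 by (simp add: countable_finite)
      ultimately show ?thesis by simp
    qed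
    have hhin: "hh p \<in> Pow (R0 \<times> R0) \<times> {H. finite H \<and> H \<subseteq> Pow R0 \<times> S}" if "p \<in> A2" for p
      unfolding hh_def using GS[OF that] Gfin[OF that] by blast
    have "\<exists>c. uncountable {p\<in>A2. hh p = c}" by (rule uncountable_fiber2[OF uA2' chh]) (rule hhin)
    then obtain c3 where uA3: "uncountable {p\<in>A2. hh p = c3}" by (elim exE)
    define A3 where "A3 = {p\<in>A2. hh p = c3}"
    have uA3': "uncountable A3" using uA3 unfolding A3_def .
    have A3A2: "A3 \<subseteq> A2" unfolding A3_def by blast
    have hh3: "p \<in> A3 \<Longrightarrow> q \<in> A3 \<Longrightarrow> hh p = hh q" for p q unfolding A3_def by simp
    define \<delta> where "\<delta> = Max (insert undefined (Ctbl -` (lvl ` R0)))"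
    have finC: "finite (Ctbl -` (lvl ` R0))" using finR0 by (intro finite_vimageI) (auto simp: inj_def)
    have dl: "r \<in> R0 \<Longrightarrow> lvl r = Ctbl g \<Longrightarrow> g \<le> \<delta>" for r g
    proof -
      assume "r \<in> R0" "lvl r = Ctbl g"
      hence "g \<in> Ctbl -` (lvl ` R0)" by force
      thus "g \<le> \<delta>" unfolding \<delta>_def using finC by simp
    qed
    define NB where "NB p = {z. Tp z \<in> Xp p \<and> Tp z \<notin> R0}" for p
    have finNB: "finite (NB p)" if "p \<in> A" for p
    proof -
      have "NB p \<subseteq> Tp -` Xp p" unfolding NB_def by blast
      moreover have "finite (Tp -` Xp p)" using cnd.fin[OF cndp[OF that]] by (intro finite_vimageI) (auto simp: inj_def)
      ultimately show ?thesis by (rule finite_subset)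
    qed
    have "\<exists>c. uncountable {p\<in>A3. card (NB p) = c}"
      by (rule uncountable_fiber2[OF uA3' countableI_type[of "UNIV::nat set"]]) (rule UNIV_I)
    then obtain m where uA4: "uncountable {p\<in>A3. card (NB p) = m}" by (elim exE)
    define A4 where "A4 = {p\<in>A3. card (NB p) = m}"
    have uA4': "uncountable A4" using uA4 unfolding A4_def .
    have A4A3: "A4 \<subseteq> A3" unfolding A4_def by blast
    have A4A: "A4 \<subseteq> A" using A4A3 A3A2 A2A by blast
    have cardm: "p \<in> A4 \<Longrightarrow> card (NB p) = m" for p unfolding A4_def by blast
    have comp: "compatible F p q" if pq: "p \<in> A4" "q \<in> A4" "p \<noteq> q"
       and dF: "\<forall>z z'. z \<in> NB p \<longrightarrow> z' \<in> NB q \<longrightarrow> \<delta> < F {z, z'}" for p q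
    proof -
      have p2: "p \<in> A2" "q \<in> A2" using pq A4A3 A3A2 by blast+
      have p3: "p \<in> A3" "q \<in> A3" using pq A4A3 by blast+
      have hpq: "hh p = hh q" using hh3 p3 by blast
      have Leq: "Lp p \<inter> R0 \<times> R0 = Lp q \<inter> R0 \<times> R0" and Geq: "G p = G q" using hpq unfolding hh_def by simp_all
      have "amalg F (Xp p) (Lp p) (Ip p) (Xp q) (Lp q) (Ip q) \<delta>"
      proof (intro amalg.intro amalg_axioms.intro)
        show "cnd F (Xp p) (Lp p) (Ip p)" "cnd F (Xp q) (Lp q) (Ip q)" using cndp pq A4A by blast+
      next
        fix x y assume h: "x \<in> Xp p" "x \<in> Xp q" "y \<in> Xp p" "y \<in> Xp q"
        hence "x \<in> R0" "y \<in> R0" using XI p2 pq(3) by blast+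
        thus "((x, y) \<in> Lp p) = ((x, y) \<in> Lp q)" using Leq by blast
      next
        fix x y assume h: "x \<in> Xp p" "x \<in> Xp q" "y \<in> Xp p" "y \<in> Xp q" "x \<noteq> y"
        hence xyR: "{x,y} \<subseteq> R0" using XI p2 pq(3) by blast
        have c2: "card {x,y} = 2" using h(5) by simp
        show "Ip p {x, y} = Ip q {x, y}"
        proof
          show "Ip p {x, y} \<subseteq> Ip q {x, y}"
          proof
            fix v assume "v \<in> Ip p {x,y}"
            hence "({x,y},v) \<in> G p" unfolding G_def using xyR c2 by blast
            hence "({x,y},v) \<in> G q" using Geq by simp
            thus "v \<in> Ip q {x,y}" unfolding G_def by blast
          qed
        next
          show "Ip q {x, y} \<subseteq> Ip p {x, y}"
          proof
            fix v assume "v \<in> Ip q {x,y}"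
            hence "({x,y},v) \<in> G q" unfolding G_def using xyR c2 by blast
            hence "({x,y},v) \<in> G p" using Geq by simp
            thus "v \<in> Ip p {x,y}" unfolding G_def by blast
          qed
        qed
      next
        fix x y assume h: "x \<in> Xp p" "y \<in> Xp q" "blk_of x = blk_of y" "lvl x = lvl y"
        have "key x = key y" using h by (simp add: key_def)
        have "p \<in> A1" "q \<in> A1" using p2 unfolding A2_def by blast+
        hence Keq: "key ` Xp p \<inter> key ` Xp q = K0" using K0 pq(3) by blast
        have "key x \<in> key ` Xp p" using h(1) by (rule imageI)
        moreover have "key y \<in> key ` Xp q" using h(2) by (rule imageI)
        ultimately have "key x \<in> key ` Xp p \<inter> key ` Xp q" using \<open>key x = key y\<close> by simp
        hence "key x \<in> K0" using Keq by simp
        hence "x \<in> R p" "y \<in> R q" using h(1,2) \<open>key x = key y\<close> unfolding R_def by simp_all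
        hence "x \<in> R0" "y \<in> R0" using RA2[OF p2(1)] RA2[OF p2(2)] by simp_all
        thus "x \<in> Xp q \<and> y \<in> Xp p" using R0X p2 by blast
      next
        fix r g assume "r \<in> Xp p" "r \<in> Xp q" "lvl r = Ctbl g"
        thus "g \<le> \<delta>" using XI p2 pq(3) dl by blast
      next
        fix z z' assume h: "Tp z \<in> Xp p" "Tp z \<notin> Xp q" "Tp z' \<in> Xp q" "Tp z' \<notin> Xp p"
        have "z \<in> NB p" "z' \<in> NB q" using h R0X p2 unfolding NB_def by blast+
        thus "\<delta> < F {z, z'}" using dF by blast
      qed
      hence "compatible F (Xp p, Lp p, Ip p) (Xp q, Lp q, Ip q)" by (rule amalg.amalgam_compatible)
      thus ?thesis by (simp add: pe)
    qed
    show False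
    proof (cases "m = 0")
      case True
      obtain p q where pq: "p \<in> A4" "q \<in> A4" "p \<noteq> q" using unc_two[OF uA4'] by (elim exE conjE)
      have "finite (NB p)" using finNB pq(1) A4A by blast
      hence "NB p = {}" using cardm[OF pq(1)] True by simp
      hence "compatible F p q" using comp[OF pq] by blast
      thus False using anti pq A4A by blast
    next
      case False
      have disj: "NB p \<inter> NB q = {}" if "p \<in> A4" "q \<in> A4" "p \<noteq> q" for p q
      proof -
        have "p \<in> A2" "q \<in> A2" using that A4A3 A3A2 by blast+
        thus ?thesis using XI that unfolding NB_def by blast
      qed
      have ne: "NB p \<noteq> {}" if "p \<in> A4" for p using cardm[OF that] False by auto
      have inj: "inj_on NB A4"
      proof (rule inj_onI)
        fix p q assume "p \<in> A4" "q \<in> A4" "NB p = NB q"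
        thus "p = q" using disj ne by fastforce
      qed
      have uFam: "uncountable (NB ` A4)"
      proof
        assume "countable (NB ` A4)"
        hence "countable A4" using inj by (rule countable_image_inj_on)
        thus False using uA4' by simp
      qed
      obtain Fam where Fam0: "Fam \<subseteq> NB ` A4 \<and> ordIso2 (card_of Fam) (card_of (UNIV::'c set))"
        using omega1_subset[OF om uFam] by (rule exE)
      have FamA: "a \<in> Fam \<Longrightarrow> \<exists>p. p \<in> A4 \<and> a = NB p" for a
      proof -
        assume "a \<in> Fam"
        hence "a \<in> NB ` A4" using conjunct1[OF Fam0] by blast
        thus ?thesis by blast
      qed
      have FamS: "Fam \<subseteq> {a. finite a \<and> card a = m}"
      proof
        fix a assume "a \<in> Fam"
        then obtain p where p: "p \<in> A4" "a = NB p" using FamA by blast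
        have "finite (NB p)" using finNB p(1) A4A by blast
        thus "a \<in> {a. finite a \<and> card a = m}" using cardm[OF p(1)] p(2) by simp
      qed
      have FamD: "\<forall>a\<in>Fam. \<forall>b\<in>Fam. a \<noteq> b \<longrightarrow> a \<inter> b = {}"
      proof (intro ballI impI)
        fix a b assume ab: "a \<in> Fam" "b \<in> Fam" "a \<noteq> b"
        obtain p where p: "p \<in> A4" "a = NB p" using FamA ab(1) by blast
        obtain q where q: "q \<in> A4" "b = NB q" using FamA ab(2) by blast
        have "p \<noteq> q" using p q ab(3) by blast
        thus "a \<inter> b = {}" using disj[OF p(1) q(1)] p q by simp
      qed
      have su: "\<forall>(\<delta>::'c) (\<nu>::nat) (A::'l set set).
        A \<subseteq> {a. finite a \<and> card a = \<nu>} \<and>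
        (\<forall>a\<in>A. \<forall>b\<in>A. a \<noteq> b \<longrightarrow> a \<inter> b = {}) \<and>
        ordIso2 (card_of A) (card_of (UNIV :: 'c set))
        \<longrightarrow> (\<exists>a\<in>A. \<exists>b\<in>A. a \<noteq> b \<and> (\<forall>\<alpha>\<in>a. \<forall>\<beta>\<in>b. \<delta> < F {\<alpha>, \<beta>}))"
        using SU unfolding strongly_unbounded_def .
      have "\<exists>a\<in>Fam. \<exists>b\<in>Fam. a \<noteq> b \<and> (\<forall>\<alpha>\<in>a. \<forall>\<beta>\<in>b. \<delta> < F {\<alpha>, \<beta>})"
        using spec[OF spec[OF spec[OF su, of \<delta>], of m], of Fam] FamS FamD conjunct2[OF Fam0] by simp
      then obtain a b where ab: "a \<in> Fam" "b \<in> Fam" "a \<noteq> b" "\<forall>\<alpha>\<in>a. \<forall>\<beta>\<in>b. \<delta> < F {\<alpha>, \<beta>}" by blast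
      obtain p where p: "p \<in> A4" "a = NB p" using FamA ab(1) by blast
      obtain q where q: "q \<in> A4" "b = NB q" using FamA ab(2) by blast
      have "p \<noteq> q" using p q ab by blast
      hence "compatible F p q" using comp[OF p(1) q(1)] ab p q by blast
      thus False using anti p q \<open>p \<noteq> q\<close> A4A by blast
    qed
  qed
qed


end
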